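(* Fix $\beta_1,\beta_2\in(0,\infty)$, $\bar p\in(0,1)$ and set $p_0:=\frac{\bar p}{\bar p+(1-\bar p)\exp(-2d\beta_1)}\in(0,1)$. Then for any finite $\Lambda\subseteq\mathbb{Z}^d_n$ and any $m\in\mathbb{Z}^\Lambda$, $$\langle\cos(m\theta)\rangle_{\mu_{\Lambda,\beta_1,\beta_2,\kappa}}\leq\mathbb{E}_{p_0}\big[\langle\cos(m\theta)\rangle_{\mu_{\Lambda,\beta_1,\beta_2,r}}\big],$$ where $\kappa=\kappa(\bar p)$.
   Context: Fix $n\in\mathbb{N}$. $\mathbb{Z}^d_n$ is the graph obtained from $\mathbb{Z}^d$ by adding $n$ vertices on each edge; vertices of $\mathbb{Z}^d$ are identified with the corresponding vertices of $\mathbb{Z}^d_n$, and $x\sim_n y$ denotes adjacency in $\mathbb{Z}^d_n$. $m\theta:=\sum_{x\in\Lambda}m_x\theta_x$. For $r\in\{0,1\}^\Lambda$ and $\theta\in[0,2\pi)^\Lambda$, $H_{\Lambda,\beta_1,\beta_2}(r,\theta)=-\beta_1\sum_{x\sim_n y,\,x,y\in\Lambda,\,\{x,y\}\cap\mathbb{Z}^d\neq\emptyset}r_xr_y\cos(\theta_x-\theta_y)-\beta_2\sum_{x\sim_n y,\,x,y\in\Lambda,\,\{x,y\}\cap\mathbb{Z}^d=\emptyset}r_xr_y\cos(\theta_x-\theta_y)$. Quenched measure: $\mu_{\Lambda,\beta_1,\beta_2,r}(d\theta)=Z^{-1}e^{-H_{\Lambda,\beta_1,\beta_2}(r,\theta)}\prod_{x\in\Lambda}d\theta_x$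 ($d\theta_x$ uniform on $[0,2\pi)$). Let $\kappa(\bar p)=(\kappa_x)$ with $\kappa_x=(1-\bar p)\delta_0+\bar p\delta_1$ for $x\in\mathbb{Z}^d$ and $\kappa_x=\delta_1$ for $x\in\mathbb{Z}^d_n\setminus\mathbb{Z}^d$; annealed measure: $\mu_{\Lambda,\beta_1,\beta_2,\kappa}(dr\,d\theta)=Z^{-1}e^{-H_{\Lambda,\beta_1,\beta_2}(r,\theta)}\prod_{x\in\Lambda}d\kappa_x(r_x)d\theta_x$. $\mathbb{P}_{\Lambda,p}$ is the product measure on $\{0,1\}^\Lambda$ with $\mathbb{P}(r_x=1)=p$ for $x\in\Lambda\cap\mathbb{Z}^d$ and $\mathbb{P}(r_x=1)=1$ for $x\in\Lambda\setminus\mathbb{Z}^d$; $\mathbb{E}_p$ is its expectation. *)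

theory Defs
  imports "HOL-Probability.Probability"
begin

text \<open>Model of the decorated lattice Z^d_n: Z^d is the type 'd => int with 'd finite,
  d = CARD('d). Z^d_n is realised inside Z^d scaled by (n+1): the original vertex x
  of Z^d corresponds to (n+1) x, and the n added vertices on the edge {x, x+e_i}
  are (n+1) x + k e_i, k = 1..n.\<close>

definition Zd_vert :: "nat \<Rightarrow> ('d::finite \<Rightarrow> int) set" where
  "Zd_vert n = {v. \<forall>i. int (n + 1) dvd v i}"

definition Zdn_vert :: "nat \<Rightarrow> ('d::finite \<Rightarrow> int) set" where
  "Zdn_vert n = {v. card {i. \<not> int (n + 1) dvd v i} \<le> 1}"

definition adj_n :: "nat \<Rightarrow> ('d::finite \<Rightarrow> int) \<Rightarrow> ('d \<Rightarrow> int) \<Rightarrow> bool" where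
  "adj_n n v w \<longleftrightarrow> v \<in> Zdn_vert n \<and> w \<in> Zdn_vert n \<and> (\<Sum>i\<in>UNIV. \<bar>v i - w i\<bar>) = 1"

text \<open>Hamiltonian; the sum over unordered edges {x,y} is written as half the sum over
  ordered adjacent pairs.\<close>
definition hamiltonian ::
  "nat \<Rightarrow> ('d::finite \<Rightarrow> int) set \<Rightarrow> real \<Rightarrow> real \<Rightarrow> (('d \<Rightarrow> int) \<Rightarrow> real)
     \<Rightarrow> (('d \<Rightarrow> int) \<Rightarrow> real) \<Rightarrow> real" where
  "hamiltonian n \<Lambda> \<beta>1 \<beta>2 r \<theta> =
     - (1/2) * (\<Sum>x\<in>\<Lambda>. \<Sum>y\<in>\<Lambda>.
         if adj_n n x y then
           (if x \<in> Zd_vert n \<or> y \<in> Zd_vert n then \<beta>1 else \<beta>2) * r x * r y * cos (\<theta> x - \<theta> y)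
         else 0)"

definition angle_measure :: "('d::finite \<Rightarrow> int) set \<Rightarrow> (('d \<Rightarrow> int) \<Rightarrow> real) measure" where
  "angle_measure \<Lambda> = PiM \<Lambda> (\<lambda>_. uniform_measure lborel {0..<2*pi})"

definition mdot :: "('d::finite \<Rightarrow> int) set \<Rightarrow> (('d \<Rightarrow> int) \<Rightarrow> int) \<Rightarrow> (('d \<Rightarrow> int) \<Rightarrow> real) \<Rightarrow> real" where
  "mdot \<Lambda> m \<theta> = (\<Sum>x\<in>\<Lambda>. real_of_int (m x) * \<theta> x)"

definition quenched_avg ::
  "nat \<Rightarrow> ('d::finite \<Rightarrow> int) set \<Rightarrow> real \<Rightarrow> real \<Rightarrow> (('d \<Rightarrow> int) \<Rightarrow> real)
     \<Rightarrow> ((('d \<Rightarrow> int) \<Rightarrow> real) \<Rightarrow> real) \<Rightarrow> real" where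
  "quenched_avg n \<Lambda> \<beta>1 \<beta>2 r f =
     (\<integral>\<theta>. f \<theta> * exp (- hamiltonian n \<Lambda> \<beta>1 \<beta>2 r \<theta>) \<partial>angle_measure \<Lambda>) /
     (\<integral>\<theta>. exp (- hamiltonian n \<Lambda> \<beta>1 \<beta>2 r \<theta>) \<partial>angle_measure \<Lambda>)"

definition configs :: "nat \<Rightarrow> ('d::finite \<Rightarrow> int) set \<Rightarrow> (('d \<Rightarrow> int) \<Rightarrow> real) set" where
  "configs n \<Lambda> = PiE \<Lambda> (\<lambda>x. if x \<in> Zd_vert n then {0, 1} else {1})"

text \<open>Product Bernoulli weight: kappa(p) / P_{Lambda,p} of a configuration.\<close>
definition bern_weight :: "nat \<Rightarrow> ('d::finite \<Rightarrow> int) set \<Rightarrow> real \<Rightarrow> (('d \<Rightarrow> int) \<Rightarrow> real) \<Rightarrow> real" where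
  "bern_weight n \<Lambda> p r = (\<Prod>x\<in>\<Lambda> \<inter> Zd_vert n. if r x = 1 then p else 1 - p)"

text \<open>Annealed expectation of f under mu_{Lambda,beta1,beta2,kappa(pbar)}.\<close>
definition annealed_avg ::
  "nat \<Rightarrow> ('d::finite \<Rightarrow> int) set \<Rightarrow> real \<Rightarrow> real \<Rightarrow> real
     \<Rightarrow> ((('d \<Rightarrow> int) \<Rightarrow> real) \<Rightarrow> real) \<Rightarrow> real" where
  "annealed_avg n \<Lambda> \<beta>1 \<beta>2 pbar f =
     (\<Sum>r\<in>configs n \<Lambda>. bern_weight n \<Lambda> pbar r *
        (\<integral>\<theta>. f \<theta> * exp (- hamiltonian n \<Lambda> \<beta>1 \<beta>2 r \<theta>) \<partial>angle_measure \<Lambda>)) /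
     (\<Sum>r\<in>configs n \<Lambda>. bern_weight n \<Lambda> pbar r *
        (\<integral>\<theta>. exp (- hamiltonian n \<Lambda> \<beta>1 \<beta>2 r \<theta>) \<partial>angle_measure \<Lambda>))"

definition dil_expect :: "nat \<Rightarrow> ('d::finite \<Rightarrow> int) set \<Rightarrow> real \<Rightarrow> ((('d \<Rightarrow> int) \<Rightarrow> real) \<Rightarrow> real) \<Rightarrow> real" where
  "dil_expect n \<Lambda> p g = (\<Sum>r\<in>configs n \<Lambda>. bern_weight n \<Lambda> p r * g r)"

end

theory Submission
  imports Defs
begin


definition U :: "real measure" where "U = uniform_measure lborel {0..<2*pi}"

lemma U_prob: "prob_space U"
  unfolding U_def by (rule prob_space_uniform_measure) auto

lemma int_U: 
  fixes f :: "real \<Rightarrow> real"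
  assumes [measurable]: "f \<in> borel_measurable borel"
  shows "integral\<^sup>L U f = (\<integral>x. indicator {0..2*pi} x * f x \<partial>lborel) / (2*pi)"
proof -
  have e: "1 / ennreal (2*pi) = ennreal (1/(2*pi))"
    by (metis divide_ennreal ennreal_1 pi_gt_zero zero_less_mult_iff zero_less_numeral zero_le_one)
  have "U = density lborel (\<lambda>x. ennreal (indicator {0..<2*pi} x / (2*pi)))"
    unfolding U_def uniform_measure_def
    by (intro density_cong) (auto simp: indicator_def e)
  then have "integral\<^sup>L U f = integral\<^sup>L (density lborel (\<lambda>x. ennreal (indicator {0..<2*pi} x / (2*pi)))) f"
    by simp
  also have "\<dots> = (\<integral>x. (indicator {0..<2*pi} x / (2*pi)) *\<^sub>R f x \<partial>lborel)"
    by (rule integral_density) auto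
  also have "\<dots> = (\<integral>x. (indicator {0..2*pi} x * f x) / (2*pi) \<partial>lborel)"
    by (intro integral_cong_AE) (auto intro!: eventually_mono[OF AE_lborel_singleton[of "2*pi"]] simp: indicator_def)
  also have "\<dots> = (\<integral>x. indicator {0..2*pi} x * f x \<partial>lborel) / (2*pi)"
    by simp
  finally show ?thesis .
qed

lemma trig_2pik: "cos (C + real_of_int k * (2*pi)) = cos C" "sin (C + real_of_int k * (2*pi)) = sin C"
proof -
  have a: "cos (real_of_int k * (2*pi)) = 1" "sin (real_of_int k * (2*pi)) = 0"
    using cos_int_2pin[of k] sin_int_2pin[of k] by (simp_all add: mult.commute mult.left_commute)
  show "cos (C + real_of_int k * (2*pi)) = cos C" "sin (C + real_of_int k * (2*pi)) = sin C"
    by (simp_all add: cos_add sin_add a)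
qed

lemma U_cos: "(\<integral>y. cos (C + real_of_int k * y) \<partial>U) = (if k = 0 then cos C else 0)"
proof (cases "k = 0")
  case True
  have "(\<integral>x. indicator {0..2*pi} x * cos C \<partial>lborel) = 2*pi * cos C"
    by simp
  then show ?thesis using True by (subst int_U) auto
next
  case False
  have "(\<integral>x. indicator {0..2*pi} x *\<^sub>R cos (C + real_of_int k * x) \<partial>lborel)
      = sin (C + real_of_int k * (2*pi)) / k - sin (C + real_of_int k * 0) / k"
    using False
    by (intro integral_FTC_atLeastAtMost)
       (auto intro!: derivative_eq_intros continuous_intros simp: has_real_derivative_iff_has_vector_derivative[symmetric])
  then show ?thesis using False by (subst int_U) (auto simp: trig_2pik)
qed

lemma U_sin: "(\<integral>y. sin (C + real_of_int k * y) \<partial>U) = (if k = 0 then sin C else 0)"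
proof (cases "k = 0")
  case True
  have "(\<integral>x. indicator {0..2*pi} x * sin C \<partial>lborel) = 2*pi * sin C"
    by simp
  then show ?thesis using True by (subst int_U) auto
next
  case False
  have "(\<integral>x. indicator {0..2*pi} x *\<^sub>R sin (C + real_of_int k * x) \<partial>lborel)
      = (- cos (C + real_of_int k * (2*pi)) / k) - (- cos (C + real_of_int k * 0) / k)"
    using False
    by (intro integral_FTC_atLeastAtMost)
       (auto intro!: derivative_eq_intros continuous_intros simp: has_real_derivative_iff_has_vector_derivative[symmetric])
  then show ?thesis using False by (subst int_U) (auto simp: trig_2pik)
qed

lemma sets_U[measurable_cong, simp]: "sets U = sets borel"
  unfolding U_def by simp

lemma space_U[simp]: "space U = UNIV"
  unfolding U_def by simp

interpretation PU: product_sigma_finite "\<lambda>_::'i. U" 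
  unfolding product_sigma_finite_def using U_prob prob_space_imp_sigma_finite by blast

lemma meas_lin[measurable]:
  fixes I :: "'i set"
  assumes [measurable]: "f \<in> borel_measurable borel"
  shows "(\<lambda>\<theta>. f (C + (\<Sum>x\<in>I. real_of_int (u x) * \<theta> x))) \<in> borel_measurable (PiM I (\<lambda>_. U))"
  by measurable

lemma torus_trig:
  fixes I :: "'i set"
  assumes "finite I"
  shows "(\<integral>\<theta>. cos (C + (\<Sum>x\<in>I. real_of_int (u x) * \<theta> x)) \<partial>PiM I (\<lambda>_. U)) = (if \<forall>x\<in>I. u x = 0 then cos C else 0)
    \<and> (\<integral>\<theta>. sin (C + (\<Sum>x\<in>I. real_of_int (u x) * \<theta> x)) \<partial>PiM I (\<lambda>_. U)) = (if \<forall>x\<in>I. u x = 0 then sin C else 0)"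
  using assms
proof (induction I arbitrary: C rule: finite_induct)
  case empty
  interpret E: prob_space "PiM {} (\<lambda>_::'i. U)" by (rule prob_space_PiM) (rule U_prob)
  show ?case by (simp add: E.prob_space)
next
  case (insert i I)
  interpret P: prob_space "PiM (insert i I) (\<lambda>_::'i. U)" by (rule prob_space_PiM) (rule U_prob)
  have intc: "integrable (PiM (insert i I) (\<lambda>_. U)) (\<lambda>\<theta>. f (C + (\<Sum>x\<in>insert i I. real_of_int (u x) * \<theta> x)))"
    if "f \<in> borel_measurable borel" "\<And>t. \<bar>f t\<bar> \<le> 1" for f :: "real \<Rightarrow> real"
    by (rule P.integrable_const_bound[where B=1]) (use that in auto)
  have upd: "(\<Sum>x\<in>insert i I. real_of_int (u x) * (\<theta>(i:=y)) x) = real_of_int (u i) * y + (\<Sum>x\<in>I. real_of_int (u x) * \<theta> x)" for \<theta> y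
    using insert(2) by (simp add: sum.insert[OF insert(1,2)]) (intro sum.cong, auto)
  have "(\<integral>\<theta>. cos (C + (\<Sum>x\<in>insert i I. real_of_int (u x) * \<theta> x)) \<partial>PiM (insert i I) (\<lambda>_. U))
      = (\<integral>\<theta>. (\<integral>y. cos (C + (\<Sum>x\<in>insert i I. real_of_int (u x) * (\<theta>(i:=y)) x)) \<partial>U) \<partial>PiM I (\<lambda>_. U))"
    by (rule PU.product_integral_insert[OF insert(1,2)]) (rule intc, auto)
  also have "\<dots> = (\<integral>\<theta>. (if u i = 0 then cos (C + (\<Sum>x\<in>I. real_of_int (u x) * \<theta> x)) else 0) \<partial>PiM I (\<lambda>_. U))"
    unfolding upd
  proof (rule Bochner_Integration.integral_cong[OF refl])
    fix \<theta> :: "'i \<Rightarrow> real"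
    have "(\<lambda>y. cos (C + (real_of_int (u i) * y + (\<Sum>x\<in>I. real_of_int (u x) * \<theta> x))))
       = (\<lambda>y. cos ((C + (\<Sum>x\<in>I. real_of_int (u x) * \<theta> x)) + real_of_int (u i) * y))"
      by (simp add: add_ac)
    then show "(\<integral>y. cos (C + (real_of_int (u i) * y + (\<Sum>x\<in>I. real_of_int (u x) * \<theta> x))) \<partial>U)
       = (if u i = 0 then cos (C + (\<Sum>x\<in>I. real_of_int (u x) * \<theta> x)) else 0)"
      by (simp add: U_cos)
  qed
  also have "\<dots> = (if \<forall>x\<in>insert i I. u x = 0 then cos C else 0)"
    using insert(3)[of C] by (cases "u i = 0") auto
  finally have c: "(\<integral>\<theta>. cos (C + (\<Sum>x\<in>insert i I. real_of_int (u x) * \<theta> x)) \<partial>PiM (insert i I) (\<lambda>_. U)) = (if \<forall>x\<in>insert i I. u x = 0 then cos C else 0)" .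
  have "(\<integral>\<theta>. sin (C + (\<Sum>x\<in>insert i I. real_of_int (u x) * \<theta> x)) \<partial>PiM (insert i I) (\<lambda>_. U))
      = (\<integral>\<theta>. (\<integral>y. sin (C + (\<Sum>x\<in>insert i I. real_of_int (u x) * (\<theta>(i:=y)) x)) \<partial>U) \<partial>PiM I (\<lambda>_. U))"
    by (rule PU.product_integral_insert[OF insert(1,2)]) (rule intc, auto)
  also have "\<dots> = (\<integral>\<theta>. (if u i = 0 then sin (C + (\<Sum>x\<in>I. real_of_int (u x) * \<theta> x)) else 0) \<partial>PiM I (\<lambda>_. U))"
    unfolding upd
  proof (rule Bochner_Integration.integral_cong[OF refl])
    fix \<theta> :: "'i \<Rightarrow> real"
    have "(\<lambda>y. sin (C + (real_of_int (u i) * y + (\<Sum>x\<in>I. real_of_int (u x) * \<theta> x))))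
       = (\<lambda>y. sin ((C + (\<Sum>x\<in>I. real_of_int (u x) * \<theta> x)) + real_of_int (u i) * y))"
      by (simp add: add_ac)
    then show "(\<integral>y. sin (C + (real_of_int (u i) * y + (\<Sum>x\<in>I. real_of_int (u x) * \<theta> x))) \<partial>U)
       = (if u i = 0 then sin (C + (\<Sum>x\<in>I. real_of_int (u x) * \<theta> x)) else 0)"
      by (simp add: U_sin)
  qed
  also have "\<dots> = (if \<forall>x\<in>insert i I. u x = 0 then sin C else 0)"
    using insert(3)[of C] by (cases "u i = 0") auto
  finally show ?case using c by simp
qed




definition lin :: "'i set \<Rightarrow> ('i \<Rightarrow> int) \<Rightarrow> ('i \<Rightarrow> real) \<Rightarrow> real" where
  "lin I u \<theta> = (\<Sum>x\<in>I. real_of_int (u x) * \<theta> x)"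

abbreviation TT :: "'i set \<Rightarrow> (('i \<Rightarrow> real) \<times> ('i \<Rightarrow> real)) measure" where
  "TT I \<equiv> PiM I (\<lambda>_. U) \<Otimes>\<^sub>M PiM I (\<lambda>_. U)"

lemma lin_meas[measurable]: "lin I u \<in> borel_measurable (PiM I (\<lambda>_. U))"
  unfolding lin_def by measurable

lemma T_prob: "prob_space (PiM I (\<lambda>_. U))"
  by (rule prob_space_PiM) (rule U_prob)

lemma TT_prob: "prob_space (TT I)"
proof -
  interpret A: prob_space "PiM I (\<lambda>_. U)" by (rule T_prob)
  interpret pair_prob_space "PiM I (\<lambda>_. U)" "PiM I (\<lambda>_. U)" ..
  show ?thesis by (rule prob_space_axioms)
qed

lemma TT_sf: "pair_sigma_finite (PiM I (\<lambda>_. U)) (PiM I (\<lambda>_. U))"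
proof -
  interpret A: prob_space "PiM I (\<lambda>_. U)" by (rule T_prob)
  interpret pair_prob_space "PiM I (\<lambda>_. U)" "PiM I (\<lambda>_. U)" ..
  show ?thesis ..
qed

lemma bdd_int:
  fixes f :: "'a \<Rightarrow> real"
  assumes "prob_space M" "f \<in> borel_measurable M" "\<And>x. \<bar>f x\<bar> \<le> B"
  shows "integrable M f"
proof -
  interpret prob_space M by fact
  show ?thesis by (rule integrable_const_bound[where B=B]) (use assms in auto)
qed

lemma TT_prod:
  fixes f h :: "('i \<Rightarrow> real) \<Rightarrow> real"
  assumes [measurable]: "f \<in> borel_measurable (PiM I (\<lambda>_. U))" "h \<in> borel_measurable (PiM I (\<lambda>_. U))"
    and "\<And>x. \<bar>f x\<bar> \<le> B" "\<And>x. \<bar>h x\<bar> \<le> B"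
  shows "(\<integral>z. f (fst z) * h (snd z) \<partial>TT I) = (\<integral>x. f x \<partial>PiM I (\<lambda>_. U)) * (\<integral>x. h x \<partial>PiM I (\<lambda>_. U))"
proof -
  interpret pair_sigma_finite "PiM I (\<lambda>_. U)" "PiM I (\<lambda>_. U)" by (rule TT_sf)
  have B: "0 \<le> B" using assms(3)[of undefined] by linarith
  have "integrable (TT I) (\<lambda>(x,y). f x * h y)"
  proof (rule bdd_int[OF TT_prob, where B="B*B"])
    show "(\<lambda>(x, y). f x * h y) \<in> borel_measurable (TT I)" by measurable
    fix z :: "('i \<Rightarrow> real) \<times> ('i \<Rightarrow> real)"
    show "\<bar>case z of (x, y) \<Rightarrow> f x * h y\<bar> \<le> B * B"
      using assms(3)[of "fst z"] assms(4)[of "snd z"] B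
      by (cases z) (auto simp: abs_mult intro: mult_mono)
  qed
  then have "(\<integral>x. (\<integral>y. f x * h y \<partial>PiM I (\<lambda>_. U)) \<partial>PiM I (\<lambda>_. U)) = integral\<^sup>L (TT I) (\<lambda>(x,y). f x * h y)"
    by (rule integral_fst)
  moreover have "(\<lambda>(x,y). f x * h y) = (\<lambda>z. f (fst z) * h (snd z))" by auto
  ultimately show ?thesis by simp
qed

lemma T_cos: "finite I \<Longrightarrow> (\<integral>\<theta>. cos (lin I u \<theta>) \<partial>PiM I (\<lambda>_. U)) = (if \<forall>x\<in>I. u x = 0 then 1 else 0)"
  using torus_trig[of I 0 u] unfolding lin_def by simp

lemma T_sin: "finite I \<Longrightarrow> (\<integral>\<theta>. sin (lin I u \<theta>) \<partial>PiM I (\<lambda>_. U)) = 0"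
  using torus_trig[of I 0 u] unfolding lin_def by simp

lemma TT_cos:
  assumes "finite I"
  shows "(\<integral>z. cos (lin I u (fst z) + lin I v (snd z)) \<partial>TT I) = (if (\<forall>x\<in>I. u x = 0) \<and> (\<forall>x\<in>I. v x = 0) then 1 else 0)"
proof -
  interpret P: prob_space "TT I" by (rule TT_prob)
  have "(\<integral>z. cos (lin I u (fst z) + lin I v (snd z)) \<partial>TT I)
     = (\<integral>z. cos (lin I u (fst z)) * cos (lin I v (snd z)) - sin (lin I u (fst z)) * sin (lin I v (snd z)) \<partial>TT I)"
    by (simp add: cos_add)
  also have "\<dots> = (\<integral>z. cos (lin I u (fst z)) * cos (lin I v (snd z)) \<partial>TT I) - (\<integral>z. sin (lin I u (fst z)) * sin (lin I v (snd z)) \<partial>TT I)"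
    by (intro Bochner_Integration.integral_diff bdd_int[OF TT_prob, where B=1]) (auto simp: abs_mult intro: mult_le_one)
  also have "\<dots> = (if (\<forall>x\<in>I. u x = 0) \<and> (\<forall>x\<in>I. v x = 0) then 1 else 0)"
    using TT_prod[of "\<lambda>\<theta>. cos (lin I u \<theta>)" I "\<lambda>\<theta>. cos (lin I v \<theta>)" 1]
      TT_prod[of "\<lambda>\<theta>. sin (lin I u \<theta>)" I "\<lambda>\<theta>. sin (lin I v \<theta>)" 1]
    by (simp add: T_cos T_sin assms)
  finally show ?thesis .
qed

definition fac :: "'i set \<Rightarrow> ('i \<Rightarrow> int) \<Rightarrow> real \<Rightarrow> ('i \<Rightarrow> real) \<times> ('i \<Rightarrow> real) \<Rightarrow> real" where
  "fac I k \<sigma> z = cos (lin I k (fst z)) + \<sigma> * cos (lin I k (snd z))"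

definition mnm :: "'i set \<Rightarrow> (('i \<Rightarrow> int) \<times> real) list \<Rightarrow> ('i \<Rightarrow> real) \<times> ('i \<Rightarrow> real) \<Rightarrow> real" where
  "mnm I L z = prod_list (map (\<lambda>(k,\<sigma>). fac I k \<sigma> z) L)"

fun Af :: "'i set \<Rightarrow> (('i \<Rightarrow> int) \<times> real) list \<Rightarrow> ('i \<Rightarrow> int) \<Rightarrow> real" where
  "Af I [] w = (if \<forall>x\<in>I. w x = 0 then 1 else 0)"
| "Af I ((k,\<sigma>)#L) w = Af I L (\<lambda>x. w x + k x) + \<sigma> * Af I L (\<lambda>x. w x - k x)"

lemma fac_meas[measurable]: "fac I k \<sigma> \<in> borel_measurable (TT I)"
  unfolding fac_def by measurable

lemma mnm_Nil: "mnm I [] = (\<lambda>_. 1)"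
  unfolding mnm_def by (rule ext) simp

lemma mnm_Cons: "mnm I ((k,\<sigma>)#L) = (\<lambda>z. fac I k \<sigma> z * mnm I L z)"
  unfolding mnm_def by (rule ext) simp

lemma mnm_meas[measurable]: "mnm I L \<in> borel_measurable (TT I)"
proof (induction L)
  case Nil
  then show ?case unfolding mnm_Nil by simp
next
  case (Cons a L)
  then show ?case by (cases a) (simp only: mnm_Cons borel_measurable_times fac_meas)
qed

lemma mnm_bound: "(\<forall>(k,\<sigma>)\<in>set L. \<bar>\<sigma>\<bar> \<le> 1) \<Longrightarrow> \<bar>mnm I L z\<bar> \<le> 2 ^ length L"
proof (induction L)
  case Nil
  then show ?case by (simp add: mnm_Nil)
next
  case (Cons a L)
  obtain k \<sigma> where a: "a = (k,\<sigma>)" by force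
  have "\<bar>fac I k \<sigma> z\<bar> \<le> 2"
  proof -
    have "\<bar>\<sigma> * cos (lin I k (snd z))\<bar> \<le> 1"
      using Cons(2) a by (auto simp: abs_mult intro: mult_le_one)
    then show ?thesis unfolding fac_def
      using abs_cos_le_one[of "lin I k (fst z)"] abs_triangle_ineq[of "cos (lin I k (fst z))" "\<sigma> * cos (lin I k (snd z))"]
      by linarith
  qed
  moreover have "\<bar>mnm I L z\<bar> \<le> 2 ^ length L" using Cons by auto
  ultimately show ?case using a
    by (auto simp: mnm_def abs_mult intro: mult_mono)
qed

lemma lin_add: "lin I (\<lambda>x. u x + k x) \<theta> = lin I u \<theta> + lin I k \<theta>"
  unfolding lin_def by (simp add: sum.distrib algebra_simps)

lemma lin_diff: "lin I (\<lambda>x. u x - k x) \<theta> = lin I u \<theta> - lin I k \<theta>"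
  unfolding lin_def by (simp add: sum_subtractf algebra_simps)

lemma alg4:
  fixes \<sigma> c a b p q :: real
  assumes "\<sigma> * \<sigma> = 1"
  shows "1/2*(c*a*b) + 1/2*(c*p*q) + \<sigma>/2*(c*a*q) + \<sigma>/2*(c*p*b) = c/2*(a+\<sigma>*p)*(b+\<sigma>*q)"
proof -
  have "c/2*(a+\<sigma>*p)*(b+\<sigma>*q) = 1/2*(c*a*b) + (\<sigma>*\<sigma>)*(1/2*(c*p*q)) + \<sigma>/2*(c*a*q) + \<sigma>/2*(c*p*b)"
    by (simp add: algebra_simps)
  then show ?thesis using assms by simp
qed

lemma int4:
  fixes f1 f2 f3 f4 :: "'a \<Rightarrow> real"
  assumes "integrable M f1" "integrable M f2" "integrable M f3" "integrable M f4"
  shows "(\<integral>z. a * f1 z + b * f2 z + c * f3 z + d * f4 z \<partial>M) = a * integral\<^sup>L M f1 + b * integral\<^sup>L M f2 + c * integral\<^sup>L M f3 + d * integral\<^sup>L M f4"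
  using assms by (simp add: Bochner_Integration.integral_add integrable_add)

lemma core:
  assumes "finite I" "\<forall>(k,\<sigma>)\<in>set L. \<sigma> = 1 \<or> \<sigma> = -1"
  shows "(\<integral>z. cos (lin I u (fst z) + lin I v (snd z)) * mnm I L z \<partial>TT I)
     = (1/2)^length L * Af I L (\<lambda>x. u x + v x) * Af I L (\<lambda>x. u x - v x)"
  using assms(2)
proof (induction L arbitrary: u v)
  case Nil
  have "(\<forall>x\<in>I. u x + v x = 0) \<and> (\<forall>x\<in>I. u x - v x = 0) \<longleftrightarrow> (\<forall>x\<in>I. u x = 0) \<and> (\<forall>x\<in>I. v x = 0)"
    by auto
  then show ?case using TT_cos[OF assms(1), of u v] by (simp add: mnm_Nil)
next
  case (Cons a L)
  obtain k \<sigma> where a: "a = (k,\<sigma>)" by force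
  have sg: "\<sigma> = 1 \<or> \<sigma> = -1" using Cons(2) a by auto
  have Lb: "\<forall>(k,\<sigma>)\<in>set L. \<bar>\<sigma>\<bar> \<le> 1" using Cons(2) by auto
  define G where "G u v z = cos (lin I u (fst z) + lin I v (snd z)) * mnm I L z" for u v z
  have Gi: "integrable (TT I) (G u v)" for u v
  proof (rule bdd_int[OF TT_prob, where B="2^length L"])
    show "G u v \<in> borel_measurable (TT I)" unfolding G_def by measurable
    fix z
    show "\<bar>G u v z\<bar> \<le> 2 ^ length L"
    proof -
      have "\<bar>cos (lin I u (fst z) + lin I v (snd z))\<bar> * \<bar>mnm I L z\<bar> \<le> 1 * \<bar>mnm I L z\<bar>"
        by (rule mult_right_mono) auto
      then show ?thesis unfolding G_def using mnm_bound[OF Lb, of I z] by (simp add: abs_mult)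
    qed
  qed
  have pt: "cos (lin I u (fst z) + lin I v (snd z)) * mnm I (a#L) z
     = (1/2) * G (\<lambda>x. u x + k x) v z + (1/2) * G (\<lambda>x. u x - k x) v z
       + (\<sigma>/2) * G u (\<lambda>x. v x + k x) z + (\<sigma>/2) * G u (\<lambda>x. v x - k x) z" for z
  proof -
    let ?U = "lin I u (fst z)" and ?V = "lin I v (snd z)" and ?A = "lin I k (fst z)" and ?B = "lin I k (snd z)"
    let ?M = "mnm I L z"
    have e: "?U + ?A + ?V = (?U + ?V) + ?A" "?U - ?A + ?V = (?U + ?V) - ?A" "?U + (?V + ?B) = (?U + ?V) + ?B" "?U + (?V - ?B) = (?U + ?V) - ?B"
      by simp_all
    have t1: "cos (?U + ?V) * cos ?A = (1/2) * cos (?U + ?A + ?V) + (1/2) * cos (?U - ?A + ?V)"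
      unfolding e cos_times_cos by simp
    have t2: "cos (?U + ?V) * cos ?B = (1/2) * cos (?U + (?V + ?B)) + (1/2) * cos (?U + (?V - ?B))"
      unfolding e cos_times_cos by simp
    have "cos (?U + ?V) * mnm I (a#L) z = (cos (?U + ?V) * cos ?A) * ?M + \<sigma> * (cos (?U + ?V) * cos ?B) * ?M"
      unfolding a mnm_Cons fac_def by (simp add: distrib_left distrib_right mult.assoc)
    also have "\<dots> = (1/2) * (cos (?U + ?A + ?V) * ?M) + (1/2) * (cos (?U - ?A + ?V) * ?M)
       + (\<sigma>/2) * (cos (?U + (?V + ?B)) * ?M) + (\<sigma>/2) * (cos (?U + (?V - ?B)) * ?M)"
      unfolding t1 t2 by (simp add: distrib_left distrib_right mult.assoc)
    also have "\<dots> = (1/2) * G (\<lambda>x. u x + k x) v z + (1/2) * G (\<lambda>x. u x - k x) v z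
       + (\<sigma>/2) * G u (\<lambda>x. v x + k x) z + (\<sigma>/2) * G u (\<lambda>x. v x - k x) z"
      unfolding G_def lin_add lin_diff ..
    finally show ?thesis .
  qed
  have "(\<integral>z. cos (lin I u (fst z) + lin I v (snd z)) * mnm I (a#L) z \<partial>TT I)
     = (1/2) * integral\<^sup>L (TT I) (G (\<lambda>x. u x + k x) v) + (1/2) * integral\<^sup>L (TT I) (G (\<lambda>x. u x - k x) v)
       + (\<sigma>/2) * integral\<^sup>L (TT I) (G u (\<lambda>x. v x + k x)) + (\<sigma>/2) * integral\<^sup>L (TT I) (G u (\<lambda>x. v x - k x))"
    unfolding pt by (rule int4) (rule Gi)+
  also have "\<dots> = (1/2)^length (a#L) * Af I (a#L) (\<lambda>x. u x + v x) * Af I (a#L) (\<lambda>x. u x - v x)"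
  proof -
    have IH: "integral\<^sup>L (TT I) (G u' v') = (1/2)^length L * Af I L (\<lambda>x. u' x + v' x) * Af I L (\<lambda>x. u' x - v' x)" for u' v'
      unfolding G_def using Cons by auto
    have e1: "(\<lambda>x. u x + k x + v x) = (\<lambda>x. u x + v x + k x)" "(\<lambda>x. u x + k x - v x) = (\<lambda>x. u x - v x + k x)"
      "(\<lambda>x. u x - k x + v x) = (\<lambda>x. u x + v x - k x)" "(\<lambda>x. u x - k x - v x) = (\<lambda>x. u x - v x - k x)"
      "(\<lambda>x. u x + (v x + k x)) = (\<lambda>x. u x + v x + k x)" "(\<lambda>x. u x - (v x + k x)) = (\<lambda>x. u x - v x - k x)"
      "(\<lambda>x. u x + (v x - k x)) = (\<lambda>x. u x + v x - k x)" "(\<lambda>x. u x - (v x - k x)) = (\<lambda>x. u x - v x + k x)"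
      by (auto simp: algebra_simps)
    have s2: "\<sigma> * \<sigma> = 1" using sg by auto
    have h: "(1/2::real)^(length L + Suc 0) = (1/2)^length L / 2" by simp
    show ?thesis unfolding IH e1 a Af.simps list.size(4) h
      by (rule alg4[OF s2])
  qed
  finally show ?case .
qed



lemma mnm_int: "\<forall>(k,\<sigma>)\<in>set L. \<bar>\<sigma>\<bar> \<le> 1 \<Longrightarrow> integrable (TT I) (mnm I L)"
  by (rule bdd_int[OF TT_prob _ mnm_bound]) auto

lemma mnm_nonneg:
  assumes "finite I" "\<forall>(k,\<sigma>)\<in>set L. \<sigma> = 1 \<or> \<sigma> = -1"
  shows "0 \<le> (\<integral>z. mnm I L z \<partial>TT I)"
proof -
  have "(\<integral>z. cos (lin I (\<lambda>_. 0) (fst z) + lin I (\<lambda>_. 0) (snd z)) * mnm I L z \<partial>TT I)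
     = (1/2)^length L * Af I L (\<lambda>x. 0 + 0) * Af I L (\<lambda>x. 0 - 0)"
    by (rule core[OF assms])
  moreover have "lin I (\<lambda>_. 0) \<theta> = 0" for \<theta> by (simp add: lin_def)
  ultimately have "(\<integral>z. mnm I L z \<partial>TT I) = (1/2)^length L * (Af I L (\<lambda>x. 0) * Af I L (\<lambda>x. 0))"
    by simp
  then show ?thesis by simp
qed

inductive_set Dc :: "'i set \<Rightarrow> ((('i \<Rightarrow> real) \<times> ('i \<Rightarrow> real)) \<Rightarrow> real) set" for I where
  Dc_const: "0 \<le> c \<Longrightarrow> (\<lambda>z. c) \<in> Dc I"
| Dc_fac: "\<sigma> = 1 \<or> \<sigma> = -1 \<Longrightarrow> fac I k \<sigma> \<in> Dc I"
| Dc_add: "f \<in> Dc I \<Longrightarrow> g \<in> Dc I \<Longrightarrow> (\<lambda>z. f z + g z) \<in> Dc I"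
| Dc_mul: "f \<in> Dc I \<Longrightarrow> g \<in> Dc I \<Longrightarrow> (\<lambda>z. f z * g z) \<in> Dc I"

definition NF :: "'i set \<Rightarrow> (real \<times> (('i \<Rightarrow> int) \<times> real) list) list \<Rightarrow> ('i \<Rightarrow> real) \<times> ('i \<Rightarrow> real) \<Rightarrow> real" where
  "NF I N z = sum_list (map (\<lambda>(c,L). c * mnm I L z) N)"

definition valid :: "(real \<times> (('i \<Rightarrow> int) \<times> real) list) list \<Rightarrow> bool" where
  "valid N \<longleftrightarrow> (\<forall>(c,L)\<in>set N. 0 \<le> c \<and> (\<forall>(k,\<sigma>)\<in>set L. \<sigma> = 1 \<or> \<sigma> = -1))"

definition prodN where
  "prodN N1 N2 = concat (map (\<lambda>(c1,L1). map (\<lambda>(c2,L2). (c1*c2, L1@L2)) N2) N1)"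

lemma mnm_append: "mnm I (L1 @ L2) z = mnm I L1 z * mnm I L2 z"
  unfolding mnm_def by simp

lemma NF_Nil: "NF I [] z = 0" by (simp add: NF_def)
lemma NF_Cons: "NF I ((c,L)#N) z = c * mnm I L z + NF I N z" by (simp add: NF_def)
lemma NF_append: "NF I (N1 @ N2) z = NF I N1 z + NF I N2 z" by (simp add: NF_def)

lemma NF_map: "NF I (map (\<lambda>(c2,L2). (c1*c2, L1@L2)) N2) z = c1 * mnm I L1 z * NF I N2 z"
  by (induction N2) (auto simp: NF_Nil NF_Cons mnm_append algebra_simps)

lemma NF_prodN: "NF I (prodN N1 N2) z = NF I N1 z * NF I N2 z"
proof (induction N1)
  case Nil
  then show ?case by (simp add: prodN_def NF_Nil)
next
  case (Cons a N1)
  obtain c L where a: "a = (c,L)" by force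
  have "prodN (a#N1) N2 = map (\<lambda>(c2,L2). (c*c2, L@L2)) N2 @ prodN N1 N2"
    by (simp add: prodN_def a)
  then show ?case using Cons by (simp only: NF_append NF_map a NF_Cons) (simp add: algebra_simps)
qed

lemma valid_prodN: "valid N1 \<Longrightarrow> valid N2 \<Longrightarrow> valid (prodN N1 N2)"
  unfolding valid_def prodN_def by fastforce

lemma Dc_NF: "f \<in> Dc I \<Longrightarrow> \<exists>N. valid N \<and> f = NF I N"
proof (induction rule: Dc.induct)
  case (Dc_const c)
  then show ?case
    by (intro exI[of _ "[(c,[])]"]) (auto simp: valid_def NF_def mnm_def)
next
  case (Dc_fac \<sigma> k)
  then show ?case
    by (intro exI[of _ "[(1,[(k,\<sigma>)])]"]) (auto simp: valid_def NF_def mnm_def)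
next
  case (Dc_add f g)
  then obtain N1 N2 where "valid N1" "f = NF I N1" "valid N2" "g = NF I N2" by blast
  then show ?case
    by (intro exI[of _ "N1 @ N2"]) (auto simp: valid_def NF_append)
next
  case (Dc_mul f g)
  then obtain N1 N2 where "valid N1" "f = NF I N1" "valid N2" "g = NF I N2" by blast
  then show ?case
    by (intro exI[of _ "prodN N1 N2"]) (auto simp: valid_prodN NF_prodN)
qed

lemma NF_int:
  assumes "finite I"
  shows "valid N \<Longrightarrow> integrable (TT I) (NF I N) \<and> 0 \<le> integral\<^sup>L (TT I) (NF I N)"
proof (induction N)
  case Nil
  then show ?case by (simp add: NF_Nil[abs_def])
next
  case (Cons a N)
  obtain c L where a: "a = (c,L)" by force
  have v: "valid N" "0 \<le> c" "\<forall>(k,\<sigma>)\<in>set L. \<sigma> = 1 \<or> \<sigma> = -1" using Cons(2) a by (auto simp: valid_def)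
  have L1: "\<forall>(k,\<sigma>)\<in>set L. \<bar>\<sigma>\<bar> \<le> 1" using v(3) by auto
  have e: "NF I (a#N) = (\<lambda>z. c * mnm I L z + NF I N z)" by (simp add: a NF_Cons[abs_def])
  have i1: "integrable (TT I) (\<lambda>z. c * mnm I L z)" by (intro integrable_mult_right mnm_int L1)
  have i2: "integrable (TT I) (NF I N)" using Cons(1) v by auto
  have "integral\<^sup>L (TT I) (NF I (a#N)) = c * integral\<^sup>L (TT I) (mnm I L) + integral\<^sup>L (TT I) (NF I N)"
    unfolding e by (simp add: Bochner_Integration.integral_add[OF i1 i2])
  moreover have "0 \<le> c * integral\<^sup>L (TT I) (mnm I L)"
    using mnm_nonneg[OF assms v(3)] v(2) by simp
  ultimately show ?case using Cons(1) v i1 i2 e by auto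
qed

lemma Dc_int:
  assumes "finite I" "f \<in> Dc I"
  shows "integrable (TT I) f" "0 \<le> integral\<^sup>L (TT I) f"
  using Dc_NF[OF assms(2)] NF_int[OF assms(1)] by auto



definition Sx :: "nat \<Rightarrow> real \<Rightarrow> real" where "Sx N x = (\<Sum>a<N. x^a / fact a)"
definition Dx :: "nat \<Rightarrow> real \<Rightarrow> real" where "Dx N x = (\<Sum>a<N. (1 - (-1)^a) * (x^a / fact a))"

lemma Sx_lim: "(\<lambda>N. Sx N x) \<longlonglongrightarrow> exp x"
proof -
  have "(\<lambda>n. x^n /\<^sub>R fact n) sums exp x" by (rule exp_converges)
  then have "(\<lambda>n. x^n / fact n) sums exp x" by (simp add: divide_inverse_commute scaleR_conv_of_real)
  then show ?thesis unfolding sums_def Sx_def by simp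
qed

lemma Dx_eq: "Dx N x = Sx N x - Sx N (-x)"
  unfolding Dx_def Sx_def sum_subtractf[symmetric]
proof (rule sum.cong[OF refl])
  fix a
  have "(-x)^a = (-1)^a * x^a" by (rule power_minus)
  then show "(1 - (-1)^a) * (x^a / fact a) = x^a / fact a - (-x)^a / fact a"
    by (simp add: left_diff_distrib diff_divide_distrib)
qed

lemma Dx_lim: "(\<lambda>N. Dx N x) \<longlonglongrightarrow> exp x - exp (-x)"
  unfolding Dx_eq by (intro tendsto_diff Sx_lim)

lemma Sx_bound: "\<bar>Sx N x\<bar> \<le> exp \<bar>x\<bar>"
proof -
  have "\<bar>Sx N x\<bar> \<le> (\<Sum>a<N. \<bar>x\<bar>^a / fact a)"
    unfolding Sx_def by (rule order_trans[OF sum_abs]) (simp add: abs_mult power_abs)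
  also have "\<dots> \<le> (\<Sum>a. \<bar>x\<bar>^a / fact a)"
  proof (rule sum_le_suminf)
    have "(\<lambda>n. \<bar>x\<bar>^n /\<^sub>R fact n) sums exp \<bar>x\<bar>" by (rule exp_converges)
    then have "(\<lambda>n. \<bar>x\<bar>^n / fact n) sums exp \<bar>x\<bar>" by (simp add: divide_inverse_commute scaleR_conv_of_real)
    then show "summable (\<lambda>n. \<bar>x\<bar>^n / fact n)" by (rule sums_summable)
  qed auto
  also have "\<dots> = exp \<bar>x\<bar>"
  proof -
    have "(\<lambda>n. \<bar>x\<bar>^n /\<^sub>R fact n) sums exp \<bar>x\<bar>" by (rule exp_converges)
    then have "(\<lambda>n. \<bar>x\<bar>^n / fact n) sums exp \<bar>x\<bar>" by (simp add: divide_inverse_commute scaleR_conv_of_real)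
    then show ?thesis by (rule sums_unique[symmetric])
  qed
  finally show ?thesis .
qed

lemma Dx_bound: "\<bar>Dx N x\<bar> \<le> 2 * exp \<bar>x\<bar>"
  using Sx_bound[of N x] Sx_bound[of N "-x"] unfolding Dx_eq by simp

lemma Dc_scale: "0 \<le> c \<Longrightarrow> f \<in> Dc I \<Longrightarrow> (\<lambda>z. c * f z) \<in> Dc I"
  using Dc_mul[OF Dc_const] by blast

lemma Dc_pow: assumes f: "f \<in> Dc I" shows "(\<lambda>z. f z ^ n) \<in> Dc I"
proof (induction n)
  case 0
  then show ?case using Dc_const[of 1] by simp
next
  case (Suc n)
  then show ?case using Dc_mul[OF f Suc] by simp
qed

lemma Dc_sum: fixes N :: nat assumes F: "\<And>a. F a \<in> Dc I" shows "(\<lambda>z. \<Sum>a<N. F a z) \<in> Dc I"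
proof (induction N)
  case 0
  then show ?case using Dc_const[of 0] by simp
next
  case (Suc N)
  then show ?case using Dc_add[OF Suc F[of N]] by simp
qed

lemma Dc_Sx: "h \<in> Dc I \<Longrightarrow> (\<lambda>z. Sx N (h z)) \<in> Dc I"
  unfolding Sx_def
  by (rule Dc_sum) (simp add: divide_inverse mult.commute[of _ "inverse _"] Dc_scale Dc_pow)

lemma Dc_Dx: "h \<in> Dc I \<Longrightarrow> (\<lambda>z. Dx N (h z)) \<in> Dc I"
proof -
  assume h: "h \<in> Dc I"
  have "0 \<le> (1 - (-1::real)^a)" for a :: nat
    by (cases "even a") auto
  then show ?thesis
    unfolding Dx_def using h
    by (intro Dc_sum) (simp add: divide_inverse mult.assoc[symmetric] mult.commute[of _ "inverse _"] Dc_scale Dc_pow)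
qed

inductive_set cospoly :: "'i set \<Rightarrow> (('i \<Rightarrow> real) \<Rightarrow> real) set" for I where
  cp_zero: "(\<lambda>\<theta>. 0) \<in> cospoly I"
| cp_term: "0 \<le> c \<Longrightarrow> (\<lambda>\<theta>. c * cos (lin I k \<theta>)) \<in> cospoly I"
| cp_add: "P \<in> cospoly I \<Longrightarrow> Q \<in> cospoly I \<Longrightarrow> (\<lambda>\<theta>. P \<theta> + Q \<theta>) \<in> cospoly I"

lemma cospoly_Dc:
  assumes "P \<in> cospoly I"
  shows "(\<lambda>z. P (fst z) + P (snd z)) \<in> Dc I \<and> (\<lambda>z. P (fst z) - P (snd z)) \<in> Dc I"
  using assms
proof (induction rule: cospoly.induct)
  case cp_zero
  then show ?case using Dc_const[of 0] by simp
next
  case (cp_term c k)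
  have "(\<lambda>z. c * fac I k 1 z) \<in> Dc I" "(\<lambda>z. c * fac I k (-1) z) \<in> Dc I"
    using cp_term by (auto intro!: Dc_scale Dc_fac)
  moreover have "(\<lambda>z. c * fac I k 1 z) = (\<lambda>z. c * cos (lin I k (fst z)) + c * cos (lin I k (snd z)))"
    "(\<lambda>z. c * fac I k (-1) z) = (\<lambda>z. c * cos (lin I k (fst z)) - c * cos (lin I k (snd z)))"
    by (auto simp: fac_def right_diff_distrib distrib_left)
  ultimately show ?case by simp
next
  case (cp_add P Q)
  then have "(\<lambda>z. (P (fst z) + P (snd z)) + (Q (fst z) + Q (snd z))) \<in> Dc I"
    "(\<lambda>z. (P (fst z) - P (snd z)) + (Q (fst z) - Q (snd z))) \<in> Dc I"
    by (auto intro!: Dc_add)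
  moreover have "(\<lambda>z. (P (fst z) + P (snd z)) + (Q (fst z) + Q (snd z))) = (\<lambda>z. (P (fst z) + Q (fst z)) + (P (snd z) + Q (snd z)))"
    "(\<lambda>z. (P (fst z) - P (snd z)) + (Q (fst z) - Q (snd z))) = (\<lambda>z. (P (fst z) + Q (fst z)) - (P (snd z) + Q (snd z)))"
    by (auto simp: fun_eq_iff)
  ultimately show ?case by simp
qed

lemma cospoly_meas: "P \<in> cospoly I \<Longrightarrow> P \<in> borel_measurable (PiM I (\<lambda>_. U))"
proof (induction rule: cospoly.induct)
  case cp_zero
  then show ?case by simp
next
  case (cp_term c k)
  then show ?case by measurable
next
  case (cp_add P Q)
  then show ?case using borel_measurable_add[of P "Pi\<^sub>M I (\<lambda>_. U)" Q] by simp
qed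

lemma cospoly_bdd: "P \<in> cospoly I \<Longrightarrow> \<exists>B. \<forall>\<theta>. \<bar>P \<theta>\<bar> \<le> B"
proof (induction rule: cospoly.induct)
  case cp_zero
  then show ?case by auto
next
  case (cp_term c k)
  have "\<bar>c * cos (lin I k \<theta>)\<bar> \<le> c" for \<theta>
  proof -
    have "c * \<bar>cos (lin I k \<theta>)\<bar> \<le> c * 1" by (rule mult_left_mono) (use cp_term in auto)
    then show ?thesis using cp_term by (simp add: abs_mult)
  qed
  then show ?case by blast
next
  case (cp_add P Q)
  then obtain B1 B2 where "\<forall>\<theta>. \<bar>P \<theta>\<bar> \<le> B1" "\<forall>\<theta>. \<bar>Q \<theta>\<bar> \<le> B2" by blast
  then have "\<bar>P \<theta> + Q \<theta>\<bar> \<le> B1 + B2" for \<theta>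
    using abs_triangle_ineq[of "P \<theta>" "Q \<theta>"] by (meson add_mono order_trans)
  then show ?case by blast
qed



abbreviation TI :: "'i set \<Rightarrow> ('i \<Rightarrow> real) measure" where "TI I \<equiv> PiM I (\<lambda>_. U)"

lemma abs_mult_le:
  fixes a b A B :: real
  assumes "\<bar>a\<bar> \<le> A" "\<bar>b\<bar> \<le> B"
  shows "\<bar>a * b\<bar> \<le> A * B"
  using assms by (simp add: abs_mult mult_mono')

lemma ginibre:
  fixes I :: "'i set"
  assumes fin: "finite I" and P: "P \<in> cospoly I" and Q: "Q \<in> cospoly I"
  shows "(\<integral>\<theta>. cos (lin I m \<theta>) * exp (P \<theta>) \<partial>TI I) * (\<integral>\<theta>. exp (P \<theta>) * exp (Q \<theta>) \<partial>TI I)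
      \<le> (\<integral>\<theta>. cos (lin I m \<theta>) * exp (P \<theta>) * exp (Q \<theta>) \<partial>TI I) * (\<integral>\<theta>. exp (P \<theta>) \<partial>TI I)"
proof -
  obtain BP where BP: "\<And>\<theta>. \<bar>P \<theta>\<bar> \<le> BP" using cospoly_bdd[OF P] by blast
  obtain BQ where BQ: "\<And>\<theta>. \<bar>Q \<theta>\<bar> \<le> BQ" using cospoly_bdd[OF Q] by blast
  have BP0: "0 \<le> BP" using BP[of undefined] by linarith
  have BQ0: "0 \<le> BQ" using BQ[of undefined] by linarith
  note [measurable] = cospoly_meas[OF P] cospoly_meas[OF Q]
  define K where "K = exp (BP + BQ)"
  define g where "g \<theta> = cos (lin I m \<theta>)" for \<theta>
  define w where "w \<theta> = exp (P \<theta>)" for \<theta>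
  define E where "E \<theta> = exp (Q \<theta>)" for \<theta>
  have [measurable]: "g \<in> borel_measurable (TI I)" "w \<in> borel_measurable (TI I)" "E \<in> borel_measurable (TI I)"
    unfolding g_def w_def E_def by measurable
  have wb: "\<bar>w \<theta>\<bar> \<le> exp BP" for \<theta> unfolding w_def using BP[of \<theta>] by simp
  have Eb: "\<bar>E \<theta>\<bar> \<le> exp BQ" for \<theta> unfolding E_def using BQ[of \<theta>] by simp
  have gb: "\<bar>g \<theta>\<bar> \<le> 1" for \<theta> unfolding g_def by simp
  have K1: "exp BP \<le> K" "exp BQ \<le> K" "1 \<le> K" "exp BP * exp BQ = K"
    using BP0 BQ0 by (auto simp: K_def exp_add[symmetric])
  have b1: "\<bar>g \<theta>\<bar> \<le> K" "\<bar>w \<theta>\<bar> \<le> K" "\<bar>E \<theta>\<bar> \<le> K" for \<theta>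
    using gb[of \<theta>] wb[of \<theta>] Eb[of \<theta>] K1 by linarith+
  have b2: "\<bar>g \<theta> * w \<theta>\<bar> \<le> K" "\<bar>w \<theta> * E \<theta>\<bar> \<le> K" "\<bar>g \<theta> * w \<theta> * E \<theta>\<bar> \<le> K" for \<theta>
  proof -
    have a: "\<bar>g \<theta> * w \<theta>\<bar> \<le> 1 * exp BP" by (rule abs_mult_le[OF gb wb])
    then show "\<bar>g \<theta> * w \<theta>\<bar> \<le> K" using K1 by linarith
    have "\<bar>w \<theta> * E \<theta>\<bar> \<le> exp BP * exp BQ" by (rule abs_mult_le[OF wb Eb])
    then show "\<bar>w \<theta> * E \<theta>\<bar> \<le> K" using K1 by linarith
    have "\<bar>g \<theta> * w \<theta> * E \<theta>\<bar> \<le> (1 * exp BP) * exp BQ" by (rule abs_mult_le[OF a Eb])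
    then show "\<bar>g \<theta> * w \<theta> * E \<theta>\<bar> \<le> K" using K1 by simp
  qed
  define H where "H z = (g (fst z) - g (snd z)) * (E (fst z) - E (snd z)) * w (fst z) * w (snd z)" for z
  have Hm[measurable]: "H \<in> borel_measurable (TT I)" unfolding H_def by measurable
  have HE: "integral\<^sup>L (TT I) H = 2 * ((\<integral>\<theta>. g \<theta> * w \<theta> * E \<theta> \<partial>TI I) * (\<integral>\<theta>. w \<theta> \<partial>TI I)
      - (\<integral>\<theta>. g \<theta> * w \<theta> \<partial>TI I) * (\<integral>\<theta>. w \<theta> * E \<theta> \<partial>TI I))"
  proof -
    have pt: "H z = 1 * ((g (fst z) * w (fst z) * E (fst z)) * w (snd z))
        + (-1) * ((g (fst z) * w (fst z)) * (w (snd z) * E (snd z)))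
        + (-1) * ((w (fst z) * E (fst z)) * (g (snd z) * w (snd z)))
        + 1 * (w (fst z) * (g (snd z) * w (snd z) * E (snd z)))" for z
      unfolding H_def by (simp add: algebra_simps)
    have ip: "integrable (TT I) (\<lambda>z. f1 (fst z) * f2 (snd z))"
      if "f1 \<in> borel_measurable (TI I)" "f2 \<in> borel_measurable (TI I)" "\<And>\<theta>. \<bar>f1 \<theta>\<bar> \<le> K" "\<And>\<theta>. \<bar>f2 \<theta>\<bar> \<le> K" for f1 f2
    proof (rule bdd_int[OF TT_prob, where B="K*K"])
      show "(\<lambda>z. f1 (fst z) * f2 (snd z)) \<in> borel_measurable (TT I)" using that by measurable
      show "\<bar>f1 (fst z) * f2 (snd z)\<bar> \<le> K * K" for z by (rule abs_mult_le) (use that in auto)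
    qed
    have "integral\<^sup>L (TT I) H = 1 * (\<integral>z. (g (fst z) * w (fst z) * E (fst z)) * w (snd z) \<partial>TT I)
        + (-1) * (\<integral>z. (g (fst z) * w (fst z)) * (w (snd z) * E (snd z)) \<partial>TT I)
        + (-1) * (\<integral>z. (w (fst z) * E (fst z)) * (g (snd z) * w (snd z)) \<partial>TT I)
        + 1 * (\<integral>z. w (fst z) * (g (snd z) * w (snd z) * E (snd z)) \<partial>TT I)"
    proof -
      have i1: "integrable (TT I) (\<lambda>z. (g (fst z) * w (fst z) * E (fst z)) * w (snd z))"
        apply (rule ip) apply measurable apply measurable using b1 b2 by auto
      have i2: "integrable (TT I) (\<lambda>z. (g (fst z) * w (fst z)) * (w (snd z) * E (snd z)))"
        apply (rule ip) apply measurable apply measurable using b1 b2 by auto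
      have i3: "integrable (TT I) (\<lambda>z. (w (fst z) * E (fst z)) * (g (snd z) * w (snd z)))"
        apply (rule ip) apply measurable apply measurable using b1 b2 by auto
      have i4: "integrable (TT I) (\<lambda>z. w (fst z) * (g (snd z) * w (snd z) * E (snd z)))"
        apply (rule ip) apply measurable apply measurable using b1 b2 by auto
      show ?thesis unfolding pt by (rule int4[OF i1 i2 i3 i4])
    qed
    also have "\<dots> = 1 * ((\<integral>\<theta>. g \<theta> * w \<theta> * E \<theta> \<partial>TI I) * (\<integral>\<theta>. w \<theta> \<partial>TI I))
        + (-1) * ((\<integral>\<theta>. g \<theta> * w \<theta> \<partial>TI I) * (\<integral>\<theta>. w \<theta> * E \<theta> \<partial>TI I))
        + (-1) * ((\<integral>\<theta>. w \<theta> * E \<theta> \<partial>TI I) * (\<integral>\<theta>. g \<theta> * w \<theta> \<partial>TI I))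
        + 1 * ((\<integral>\<theta>. w \<theta> \<partial>TI I) * (\<integral>\<theta>. g \<theta> * w \<theta> * E \<theta> \<partial>TI I))"
      using TT_prod[of "\<lambda>\<theta>. g \<theta> * w \<theta> * E \<theta>" I w K]
        TT_prod[of "\<lambda>\<theta>. g \<theta> * w \<theta>" I "\<lambda>\<theta>. w \<theta> * E \<theta>" K]
        TT_prod[of "\<lambda>\<theta>. w \<theta> * E \<theta>" I "\<lambda>\<theta>. g \<theta> * w \<theta>" K]
        TT_prod[of w I "\<lambda>\<theta>. g \<theta> * w \<theta> * E \<theta>" K]
      by (simp add: b1 b2)
    finally show ?thesis by (simp add: algebra_simps)
  qed
  define HN where "HN N z = fac I m (-1) z * Sx N ((1/2) * (Q (fst z) + Q (snd z)))
      * Dx N ((1/2) * (Q (fst z) - Q (snd z))) * Sx N (P (fst z) + P (snd z))" for N z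
  have HNDc: "HN N \<in> Dc I" for N
  proof -
    have "(\<lambda>z. (1/2) * (Q (fst z) + Q (snd z))) \<in> Dc I" "(\<lambda>z. (1/2) * (Q (fst z) - Q (snd z))) \<in> Dc I"
      using cospoly_Dc[OF Q] by (auto intro!: Dc_scale[where c="1/2"] simp del: times_divide_eq_left divide_inverse_commute)
    then have "(\<lambda>z. Sx N ((1/2) * (Q (fst z) + Q (snd z)))) \<in> Dc I" "(\<lambda>z. Dx N ((1/2) * (Q (fst z) - Q (snd z)))) \<in> Dc I"
      by (auto intro!: Dc_Sx Dc_Dx)
    moreover have "(\<lambda>z. Sx N (P (fst z) + P (snd z))) \<in> Dc I" using cospoly_Dc[OF P] by (auto intro!: Dc_Sx)
    moreover have "fac I m (-1) \<in> Dc I" by (auto intro!: Dc_fac)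
    ultimately have "(\<lambda>z. fac I m (-1) z * Sx N ((1/2) * (Q (fst z) + Q (snd z)))
      * Dx N ((1/2) * (Q (fst z) - Q (snd z))) * Sx N (P (fst z) + P (snd z))) \<in> Dc I"
      by (intro Dc_mul)
    then show ?thesis unfolding HN_def[abs_def] .
  qed
  have lim: "(\<lambda>N. integral\<^sup>L (TT I) (HN N)) \<longlonglongrightarrow> integral\<^sup>L (TT I) H"
  proof (rule integral_dominated_convergence[where w="\<lambda>_. 2 * exp BQ * (2 * exp BQ) * exp (2 * BP)"])
    show "H \<in> borel_measurable (TT I)" by (rule Hm)
    show "HN N \<in> borel_measurable (TT I)" for N
      using Dc_int(1)[OF fin HNDc[of N]] by (rule borel_measurable_integrable)
    show "integrable (TT I) (\<lambda>_. 2 * exp BQ * (2 * exp BQ) * exp (2 * BP))"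
      by (rule bdd_int[OF TT_prob, where B="\<bar>2 * exp BQ * (2 * exp BQ) * exp (2 * BP)\<bar>"]) auto
    show "AE z in TT I. (\<lambda>N. HN N z) \<longlonglongrightarrow> H z"
    proof (intro AE_I2)
      fix z
      let ?s = "(1/2) * (Q (fst z) + Q (snd z))" and ?t = "(1/2) * (Q (fst z) - Q (snd z))"
      have "(\<lambda>N. HN N z) \<longlonglongrightarrow> fac I m (-1) z * exp ?s * (exp ?t - exp (- ?t)) * exp (P (fst z) + P (snd z))"
        unfolding HN_def by (intro tendsto_mult tendsto_const Sx_lim Dx_lim)
      moreover have "fac I m (-1) z * exp ?s * (exp ?t - exp (- ?t)) * exp (P (fst z) + P (snd z)) = H z"
      proof -
        have e1: "exp ?s * exp ?t = E (fst z)" "exp ?s * exp (- ?t) = E (snd z)"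
          unfolding E_def exp_add[symmetric] by (simp_all add: algebra_simps)
        have e: "exp ?s * (exp ?t - exp (- ?t)) = E (fst z) - E (snd z)"
          using e1 by (simp add: right_diff_distrib)
        have wp: "exp (P (fst z) + P (snd z)) = w (fst z) * w (snd z)" unfolding w_def by (simp add: exp_add)
        have f: "fac I m (-1) z = g (fst z) - g (snd z)" unfolding fac_def g_def by simp
        have "fac I m (-1) z * exp ?s * (exp ?t - exp (- ?t)) * exp (P (fst z) + P (snd z))
           = fac I m (-1) z * (exp ?s * (exp ?t - exp (- ?t))) * exp (P (fst z) + P (snd z))"
          by (simp only: mult.assoc)
        also have "\<dots> = (g (fst z) - g (snd z)) * (E (fst z) - E (snd z)) * (w (fst z) * w (snd z))"
          by (simp only: e f wp)
        also have "\<dots> = H z" unfolding H_def by (simp only: mult.assoc)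
        finally show ?thesis .
      qed
      ultimately show "(\<lambda>N. HN N z) \<longlonglongrightarrow> H z" by simp
    qed
    show "AE z in TT I. norm (HN N z) \<le> 2 * exp BQ * (2 * exp BQ) * exp (2 * BP)" for N
    proof (intro AE_I2)
      fix z
      have f: "\<bar>fac I m (-1) z\<bar> \<le> 2" unfolding fac_def
        using abs_cos_le_one[of "lin I m (fst z)"] abs_cos_le_one[of "lin I m (snd z)"] by linarith
      have a1: "\<bar>(1/2) * (Q (fst z) + Q (snd z))\<bar> \<le> BQ" "\<bar>(1/2) * (Q (fst z) - Q (snd z))\<bar> \<le> BQ"
        "\<bar>P (fst z) + P (snd z)\<bar> \<le> 2 * BP"
        using BQ[of "fst z"] BQ[of "snd z"] BP[of "fst z"] BP[of "snd z"] by (auto simp: abs_le_iff)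
      have s: "\<bar>Sx N ((1/2) * (Q (fst z) + Q (snd z)))\<bar> \<le> exp BQ"
        using Sx_bound[of N "(1/2) * (Q (fst z) + Q (snd z))"] a1(1) exp_le_cancel_iff order_trans by blast
      have t: "\<bar>Dx N ((1/2) * (Q (fst z) - Q (snd z)))\<bar> \<le> 2 * exp BQ"
        using Dx_bound[of N "(1/2) * (Q (fst z) - Q (snd z))"] a1(2) by (smt (verit) exp_le_cancel_iff)
      have p: "\<bar>Sx N (P (fst z) + P (snd z))\<bar> \<le> exp (2 * BP)"
        using Sx_bound[of N "P (fst z) + P (snd z)"] a1(3) exp_le_cancel_iff order_trans by blast
      show "norm (HN N z) \<le> 2 * exp BQ * (2 * exp BQ) * exp (2 * BP)"
        unfolding HN_def real_norm_def by (intro abs_mult_le f s t p)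
    qed
  qed
  have "0 \<le> integral\<^sup>L (TT I) H"
    by (rule LIMSEQ_le_const[OF lim]) (use Dc_int(2)[OF fin HNDc] in auto)
  then show ?thesis unfolding HE g_def w_def E_def by simp
qed



definition CC :: "'a set \<Rightarrow> 'a set \<Rightarrow> ('a \<Rightarrow> real) set" where
  "CC \<Lambda> W = PiE \<Lambda> (\<lambda>x. if x \<in> W then {0, 1} else {1})"

definition wt :: "'a set \<Rightarrow> real \<Rightarrow> ('a \<Rightarrow> real) \<Rightarrow> real" where
  "wt W p r = (\<Prod>x\<in>W. if r x = 1 then p else 1 - p)"

lemma CC_empty: "CC \<Lambda> {} = {(\<lambda>x\<in>\<Lambda>. 1)}"
proof -
  have "CC \<Lambda> {} = PiE \<Lambda> (\<lambda>x. {(\<lambda>x\<in>\<Lambda>. (1::real)) x})"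
    unfolding CC_def by (rule PiE_cong) auto
  also have "\<dots> = {(\<lambda>x\<in>\<Lambda>. 1)}" by (intro PiE_singleton restrict_extensional)
  finally show ?thesis .
qed

lemma CC_finite: "finite \<Lambda> \<Longrightarrow> finite (CC \<Lambda> W)"
  unfolding CC_def by (rule finite_PiE) auto

lemma CC_decomp:
  assumes x: "x \<in> \<Lambda>" "x \<notin> W"
  shows "CC \<Lambda> (insert x W) = CC \<Lambda> W \<union> (\<lambda>s. s(x:=0)) ` CC \<Lambda> W"
    and "CC \<Lambda> W \<inter> (\<lambda>s. s(x:=0)) ` CC \<Lambda> W = {}"
    and "inj_on (\<lambda>s. s(x:=0)) (CC \<Lambda> W)"
    and "\<And>s. s \<in> CC \<Lambda> W \<Longrightarrow> s x = 1"
proof -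
  show sx: "\<And>s. s \<in> CC \<Lambda> W \<Longrightarrow> s x = 1"
    using x unfolding CC_def by (auto simp: PiE_iff)
  show "CC \<Lambda> (insert x W) = CC \<Lambda> W \<union> (\<lambda>s. s(x:=0)) ` CC \<Lambda> W"
  proof (intro equalityI subsetI)
    fix r assume r: "r \<in> CC \<Lambda> (insert x W)"
    show "r \<in> CC \<Lambda> W \<union> (\<lambda>s. s(x:=0)) ` CC \<Lambda> W"
    proof (cases "r x = 1")
      case True
      then have "r \<in> CC \<Lambda> W" using r x unfolding CC_def by (force simp: PiE_iff split: if_split_asm)
      then show ?thesis by simp
    next
      case False
      then have r0: "r x = 0" using r x unfolding CC_def by (auto simp: PiE_iff)
      have "r(x:=1) \<in> CC \<Lambda> W" using r x unfolding CC_def by (auto simp: PiE_iff extensional_def)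
      moreover have "r = (r(x:=1))(x:=0)" using r0 by auto
      ultimately show ?thesis by blast
    qed
  next
    fix r assume "r \<in> CC \<Lambda> W \<union> (\<lambda>s. s(x:=0)) ` CC \<Lambda> W"
    then show "r \<in> CC \<Lambda> (insert x W)"
      using x unfolding CC_def by (force simp: PiE_iff extensional_def split: if_split_asm)
  qed
  show "CC \<Lambda> W \<inter> (\<lambda>s. s(x:=0)) ` CC \<Lambda> W = {}"
  proof -
    { fix s assume "s \<in> CC \<Lambda> W" "s(x:=0) \<in> CC \<Lambda> W"
      then have False using sx[of "s(x:=0)"] by simp }
    then show ?thesis by blast
  qed
  show "inj_on (\<lambda>s. s(x:=0)) (CC \<Lambda> W)"
  proof (rule inj_onI)
    fix s t assume "s \<in> CC \<Lambda> W" "t \<in> CC \<Lambda> W" "s(x:=0) = t(x:=0)"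
    then show "s = t" using sx by (metis fun_upd_triv fun_upd_upd)
  qed
qed

lemma sum_CC_insert:
  assumes "finite \<Lambda>" "x \<in> \<Lambda>" "x \<notin> W"
  shows "(\<Sum>r\<in>CC \<Lambda> (insert x W). F r) = (\<Sum>s\<in>CC \<Lambda> W. F s + F (s(x:=0)))"
proof -
  have "(\<Sum>r\<in>CC \<Lambda> (insert x W). F r) = (\<Sum>r\<in>CC \<Lambda> W. F r) + (\<Sum>r\<in>(\<lambda>s. s(x:=0)) ` CC \<Lambda> W. F r)"
    unfolding CC_decomp(1)[OF assms(2,3)]
    by (rule sum.union_disjoint) (simp_all add: CC_finite[OF assms(1)] CC_decomp(2)[OF assms(2,3)])
  also have "(\<Sum>r\<in>(\<lambda>s. s(x:=0)) ` CC \<Lambda> W. F r) = (\<Sum>s\<in>CC \<Lambda> W. F (s(x:=0)))"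
    by (rule sum.reindex[OF CC_decomp(3)[OF assms(2,3)], unfolded comp_def])
  finally show ?thesis by (simp add: sum.distrib)
qed

lemma CC_upd0: "r \<in> CC \<Lambda> W \<Longrightarrow> y \<in> W \<Longrightarrow> W \<subseteq> \<Lambda> \<Longrightarrow> r(y:=0) \<in> CC \<Lambda> W"
  unfolding CC_def by (auto simp: PiE_iff extensional_def)

lemma CC_mono: "r \<in> CC \<Lambda> W \<Longrightarrow> W \<subseteq> V \<Longrightarrow> r \<in> CC \<Lambda> V"
  unfolding CC_def by (force simp: PiE_iff split: if_split_asm)

lemma pt_ineq:
  fixes p q q0 c1 c0 :: real
  assumes "c0 \<le> c1" "(1-p) * q \<le> p * q0"
  shows "q * c1 + q0 * c0 \<le> (q + q0) * (p * c1 + (1-p) * c0)"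
proof -
  have "(q + q0) * (p * c1 + (1-p) * c0) - (q * c1 + q0 * c0) = (c1 - c0) * (p * q0 - (1-p) * q)"
    by (simp add: algebra_simps)
  moreover have "0 \<le> (c1 - c0) * (p * q0 - (1-p) * q)" using assms by simp
  ultimately show ?thesis by linarith
qed

lemma dom:
  assumes "finite W" "W \<subseteq> \<Lambda>" "finite \<Lambda>" "0 \<le> p" "p \<le> 1"
    and "\<forall>r\<in>CC \<Lambda> W. 0 \<le> \<nu> r"
    and "\<forall>r\<in>CC \<Lambda> W. \<forall>x\<in>W. r x = 1 \<longrightarrow> (1-p) * \<nu> r \<le> p * \<nu> (r(x:=0))"
    and "\<forall>r\<in>CC \<Lambda> W. \<forall>x\<in>W. r x = 1 \<longrightarrow> c (r(x:=0)) \<le> c r"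
  shows "(\<Sum>r\<in>CC \<Lambda> W. \<nu> r * c r) \<le> (\<Sum>r\<in>CC \<Lambda> W. \<nu> r) * (\<Sum>r\<in>CC \<Lambda> W. wt W p r * c r)"
  using assms
proof (induction W arbitrary: \<nu> c rule: finite_induct)
  case empty
  then show ?case by (simp add: CC_empty wt_def)
next
  case (insert x W)
  have x: "x \<in> \<Lambda>" "x \<notin> W" "W \<subseteq> \<Lambda>" using insert by auto
  note fin = insert(5)
  let ?C = "CC \<Lambda> (insert x W)" and ?C' = "CC \<Lambda> W"
  have sx: "s x = 1" if "s \<in> ?C'" for s using CC_decomp(4)[OF x(1,2) that] .
  have inC: "s \<in> ?C" "s(x:=0) \<in> ?C" if "s \<in> ?C'" for s
    using that CC_decomp(1)[OF x(1,2)] by auto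
  have R: "\<And>r z. r \<in> ?C \<Longrightarrow> z \<in> insert x W \<Longrightarrow> r z = 1 \<Longrightarrow> (1-p) * \<nu> r \<le> p * \<nu> (r(z:=0))"
    using insert(9) by blast
  have M: "\<And>r z. r \<in> ?C \<Longrightarrow> z \<in> insert x W \<Longrightarrow> r z = 1 \<Longrightarrow> c (r(z:=0)) \<le> c r"
    using insert(10) by blast
  have N: "\<And>r. r \<in> ?C \<Longrightarrow> 0 \<le> \<nu> r"
    using insert(8) by blast
  define \<nu>' where "\<nu>' s = \<nu> s + \<nu> (s(x:=0))" for s
  define c' where "c' s = p * c s + (1-p) * c (s(x:=0))" for s
  have h1: "\<forall>r\<in>?C'. 0 \<le> \<nu>' r" using N inC unfolding \<nu>'_def by (simp add: add_nonneg_nonneg)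
  have h2: "\<forall>r\<in>?C'. \<forall>y\<in>W. r y = 1 \<longrightarrow> (1-p) * \<nu>' r \<le> p * \<nu>' (r(y:=0))"
  proof (intro ballI impI)
    fix s y assume s: "s \<in> ?C'" and y: "y \<in> W" and sy: "s y = 1"
    have yx: "y \<noteq> x" using y x by auto
    have a: "(1-p) * \<nu> s \<le> p * \<nu> (s(y:=0))" using R[OF inC(1)[OF s] _ sy] y by simp
    have b: "(1-p) * \<nu> (s(x:=0)) \<le> p * \<nu> (s(x:=0,y:=0))" using R[OF inC(2)[OF s], of y] y sy yx by simp
    have e: "s(x:=0,y:=0) = s(y:=0,x:=0)" using yx by (auto simp: fun_eq_iff)
    show "(1-p) * \<nu>' s \<le> p * \<nu>' (s(y:=0))"
      unfolding \<nu>'_def distrib_left using a b[unfolded e] by linarith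
  qed
  have h3: "\<forall>r\<in>?C'. \<forall>y\<in>W. r y = 1 \<longrightarrow> c' (r(y:=0)) \<le> c' r"
  proof (intro ballI impI)
    fix s y assume s: "s \<in> ?C'" and y: "y \<in> W" and sy: "s y = 1"
    have yx: "y \<noteq> x" using y x by auto
    have a: "c (s(y:=0)) \<le> c s" using M[OF inC(1)[OF s] _ sy] y by simp
    have b: "c (s(x:=0,y:=0)) \<le> c (s(x:=0))" using M[OF inC(2)[OF s], of y] y sy yx by simp
    have e: "s(x:=0,y:=0) = s(y:=0,x:=0)" using yx by (auto simp: fun_eq_iff)
    have "p * c (s(y:=0)) \<le> p * c s" using a insert(6) by (rule mult_left_mono)
    moreover have "(1-p) * c (s(x:=0,y:=0)) \<le> (1-p) * c (s(x:=0))" using b insert(7) by (intro mult_left_mono) auto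
    ultimately show "c' (s(y:=0)) \<le> c' s"
      unfolding c'_def using e by simp
  qed
  have IH: "(\<Sum>r\<in>?C'. \<nu>' r * c' r) \<le> (\<Sum>r\<in>?C'. \<nu>' r) * (\<Sum>r\<in>?C'. wt W p r * c' r)"
    using insert(3)[OF x(3) fin insert(6,7) h1 h2 h3] .
  have "(\<Sum>r\<in>?C. \<nu> r * c r) = (\<Sum>s\<in>?C'. \<nu> s * c s + \<nu> (s(x:=0)) * c (s(x:=0)))"
    by (rule sum_CC_insert[OF fin x(1,2)])
  also have "\<dots> \<le> (\<Sum>s\<in>?C'. \<nu>' s * c' s)"
  proof (rule sum_mono)
    fix s assume s: "s \<in> ?C'"
    have "c (s(x:=0)) \<le> c s" using M[OF inC(1)[OF s] _ sx[OF s]] by simp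
    moreover have "(1-p) * \<nu> s \<le> p * \<nu> (s(x:=0))" using R[OF inC(1)[OF s] _ sx[OF s]] by simp
    ultimately show "\<nu> s * c s + \<nu> (s(x:=0)) * c (s(x:=0)) \<le> \<nu>' s * c' s"
      unfolding \<nu>'_def c'_def by (rule pt_ineq)
  qed
  also have "\<dots> \<le> (\<Sum>r\<in>?C'. \<nu>' r) * (\<Sum>r\<in>?C'. wt W p r * c' r)" by (rule IH)
  also have "(\<Sum>r\<in>?C'. \<nu>' r) = (\<Sum>r\<in>?C. \<nu> r)"
    unfolding \<nu>'_def by (rule sum_CC_insert[OF fin x(1,2), symmetric])
  also have "(\<Sum>r\<in>?C'. wt W p r * c' r) = (\<Sum>r\<in>?C. wt (insert x W) p r * c r)"
  proof -
    have "(\<Sum>r\<in>?C. wt (insert x W) p r * c r)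
        = (\<Sum>s\<in>?C'. wt (insert x W) p s * c s + wt (insert x W) p (s(x:=0)) * c (s(x:=0)))"
      by (rule sum_CC_insert[OF fin x(1,2)])
    also have "\<dots> = (\<Sum>s\<in>?C'. wt W p s * c' s)"
    proof (rule sum.cong[OF refl])
      fix s assume s: "s \<in> ?C'"
      have w1: "wt (insert x W) p s = p * wt W p s"
        unfolding wt_def using insert(1,2) sx[OF s] by simp
      have w0: "wt (insert x W) p (s(x:=0)) = (1-p) * wt W p s"
      proof -
        have "wt W p (s(x:=0)) = wt W p s" unfolding wt_def using x(2) by (intro prod.cong) auto
        then show ?thesis unfolding wt_def using insert(1,2) by simp
      qed
      show "wt (insert x W) p s * c s + wt (insert x W) p (s(x:=0)) * c (s(x:=0)) = wt W p s * c' s"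
        unfolding w1 w0 c'_def by (simp only: distrib_left mult.assoc mult.left_commute)
    qed
    finally show ?thesis by simp
  qed
  finally show ?case .
qed



lemma adj_sym: "adj_n n x y \<longleftrightarrow> adj_n n y x"
  unfolding adj_n_def by (auto simp: abs_minus_commute)

lemma adj_neq: "adj_n n x y \<Longrightarrow> x \<noteq> y"
  unfolding adj_n_def by auto

lemma adj_nbr:
  fixes x y :: "'d::finite \<Rightarrow> int"
  assumes "adj_n n x y"
  shows "\<exists>i s. s \<in> {1, -1} \<and> y = x(i := x i + s)"
proof -
  have S: "(\<Sum>i\<in>UNIV. \<bar>x i - y i\<bar>) = 1" using assms unfolding adj_n_def by auto
  have "x \<noteq> y" using adj_neq[OF assms] .
  then obtain i where i: "x i \<noteq> y i" by auto
  have "(\<Sum>j\<in>UNIV. \<bar>x j - y j\<bar>) = \<bar>x i - y i\<bar> + (\<Sum>j\<in>UNIV - {i}. \<bar>x j - y j\<bar>)"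
    by (rule sum.remove) auto
  moreover have "1 \<le> \<bar>x i - y i\<bar>" using i by auto
  moreover have "0 \<le> (\<Sum>j\<in>UNIV - {i}. \<bar>x j - y j\<bar>)" by (rule sum_nonneg) auto
  ultimately have a: "\<bar>x i - y i\<bar> = 1" and b: "(\<Sum>j\<in>UNIV - {i}. \<bar>x j - y j\<bar>) = 0" using S by linarith+
  have "\<forall>j\<in>UNIV - {i}. \<bar>x j - y j\<bar> = 0"
    using b by (subst (asm) sum_nonneg_eq_0_iff) auto
  then have c: "\<And>j. j \<noteq> i \<Longrightarrow> y j = x j" by auto
  have "y = x(i := x i + (y i - x i))" using c by (auto simp: fun_eq_iff)
  moreover have "y i - x i \<in> {1, -1}" using a by (auto simp: abs_if split: if_splits)
  ultimately show ?thesis by blast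
qed

lemma nbr_card:
  fixes x :: "'d::finite \<Rightarrow> int"
  shows "finite {y. adj_n n x y} \<and> card {y. adj_n n x y} \<le> 2 * CARD('d)"
proof -
  have sub: "{y. adj_n n x y} \<subseteq> (\<lambda>(i,s). x(i := x i + s)) ` (UNIV \<times> {1, -1})"
    using adj_nbr by fastforce
  have fin: "finite ((\<lambda>(i,s). x(i := x i + s)) ` ((UNIV::'d set) \<times> {1::int, -1}))" by simp
  have "card {y. adj_n n x y} \<le> card ((\<lambda>(i,s). x(i := x i + s)) ` ((UNIV::'d set) \<times> {1::int, -1}))"
    by (rule card_mono[OF fin sub])
  also have "\<dots> \<le> card ((UNIV::'d set) \<times> {1::int, -1})" by (intro card_image_le finite_cartesian_product) auto
  also have "\<dots> = 2 * CARD('d)" by (simp add: card_cartesian_product)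
  finally show ?thesis using finite_subset[OF sub fin] by simp
qed

lemma lin_delta: "finite I \<Longrightarrow> x \<in> I \<Longrightarrow> lin I (\<lambda>z. if z = x then 1 else 0) \<theta> = \<theta> x"
proof -
  assume a: "finite I" "x \<in> I"
  have "lin I (\<lambda>z. if z = x then 1 else 0) \<theta> = (\<Sum>z\<in>I. if z = x then \<theta> z else 0)"
    unfolding lin_def by (intro sum.cong) auto
  also have "\<dots> = \<theta> x" using a by simp
  finally show ?thesis .
qed

lemma lin_edge:
  assumes "finite I" "x \<in> I" "y \<in> I"
  shows "lin I (\<lambda>z. (if z = x then 1 else 0) - (if z = y then 1 else 0)) \<theta> = \<theta> x - \<theta> y"
  using lin_diff[of I "\<lambda>z. if z = x then 1 else 0" "\<lambda>z. if z = y then 1 else 0" \<theta>]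
    lin_delta[OF assms(1,2)] lin_delta[OF assms(1,3)] by simp

lemma cp_sum:
  assumes "finite A" "\<And>a. a \<in> A \<Longrightarrow> f a \<in> cospoly I"
  shows "(\<lambda>\<theta>. \<Sum>a\<in>A. f a \<theta>) \<in> cospoly I"
  using assms
proof (induction A rule: finite_induct)
  case empty
  then show ?case using cp_zero by simp
next
  case (insert a A)
  then have "(\<lambda>\<theta>. f a \<theta> + (\<Sum>a\<in>A. f a \<theta>)) \<in> cospoly I" by (intro cp_add) auto
  then show ?case using insert by simp
qed

definition Pk :: "nat \<Rightarrow> ('d::finite \<Rightarrow> int) set \<Rightarrow> (('d \<Rightarrow> int) \<Rightarrow> ('d \<Rightarrow> int) \<Rightarrow> real) \<Rightarrow> (('d \<Rightarrow> int) \<Rightarrow> real) \<Rightarrow> real" where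
  "Pk n \<Lambda> \<kappa> \<theta> = (\<Sum>x\<in>\<Lambda>. \<Sum>y\<in>\<Lambda>. if adj_n n x y then \<kappa> x y * cos (\<theta> x - \<theta> y) else 0)"

lemma Pk_cospoly:
  assumes "finite \<Lambda>" "\<And>x y. x \<in> \<Lambda> \<Longrightarrow> y \<in> \<Lambda> \<Longrightarrow> adj_n n x y \<Longrightarrow> 0 \<le> \<kappa> x y"
  shows "Pk n \<Lambda> \<kappa> \<in> cospoly \<Lambda>"
proof -
  have "(\<lambda>\<theta>. \<Sum>x\<in>\<Lambda>. \<Sum>y\<in>\<Lambda>. if adj_n n x y then \<kappa> x y * cos (\<theta> x - \<theta> y) else 0) \<in> cospoly \<Lambda>"
  proof (intro cp_sum assms(1))
    fix x y assume x: "x \<in> \<Lambda>" and y: "y \<in> \<Lambda>"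
    show "(\<lambda>\<theta>. if adj_n n x y then \<kappa> x y * cos (\<theta> x - \<theta> y) else 0) \<in> cospoly \<Lambda>"
    proof (cases "adj_n n x y")
      case True
      have "(\<lambda>\<theta>. \<kappa> x y * cos (lin \<Lambda> (\<lambda>z. (if z = x then 1 else 0) - (if z = y then 1 else 0)) \<theta>)) \<in> cospoly \<Lambda>"
        using assms(2)[OF x y True] by (rule cp_term)
      then show ?thesis using True lin_edge[OF assms(1) x y] by simp
    next
      case False
      then show ?thesis using cp_zero by simp
    qed
  qed
  then show ?thesis unfolding Pk_def[abs_def] .
qed

lemma Pk_add: "Pk n \<Lambda> \<kappa>1 \<theta> + Pk n \<Lambda> \<kappa>2 \<theta> = Pk n \<Lambda> (\<lambda>x y. \<kappa>1 x y + \<kappa>2 x y) \<theta>"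
  unfolding Pk_def sum.distrib[symmetric] by (intro sum.cong refl) (auto simp: distrib_right)

definition kap :: "nat \<Rightarrow> real \<Rightarrow> real \<Rightarrow> (('d::finite \<Rightarrow> int) \<Rightarrow> real) \<Rightarrow> ('d \<Rightarrow> int) \<Rightarrow> ('d \<Rightarrow> int) \<Rightarrow> real" where
  "kap n \<beta>1 \<beta>2 r x y = (1/2) * (if x \<in> Zd_vert n \<or> y \<in> Zd_vert n then \<beta>1 else \<beta>2) * r x * r y"

lemma negH: "- hamiltonian n \<Lambda> \<beta>1 \<beta>2 r \<theta> = Pk n \<Lambda> (kap n \<beta>1 \<beta>2 r) \<theta>"
proof -
  have "- hamiltonian n \<Lambda> \<beta>1 \<beta>2 r \<theta> = (1/2) * (\<Sum>x\<in>\<Lambda>. \<Sum>y\<in>\<Lambda>.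
         if adj_n n x y then
           (if x \<in> Zd_vert n \<or> y \<in> Zd_vert n then \<beta>1 else \<beta>2) * r x * r y * cos (\<theta> x - \<theta> y)
         else 0)" by (simp add: hamiltonian_def)
  also have "\<dots> = (\<Sum>x\<in>\<Lambda>. \<Sum>y\<in>\<Lambda>. (1/2) * (
         if adj_n n x y then
           (if x \<in> Zd_vert n \<or> y \<in> Zd_vert n then \<beta>1 else \<beta>2) * r x * r y * cos (\<theta> x - \<theta> y)
         else 0))" by (simp add: sum_distrib_left)
  also have "\<dots> = Pk n \<Lambda> (kap n \<beta>1 \<beta>2 r) \<theta>"
    unfolding Pk_def kap_def by (intro sum.cong refl) (simp add: mult.assoc)
  finally show ?thesis .
qed



lemma sum_if_c:
  fixes c :: real
  assumes "finite A"
  shows "(\<Sum>b\<in>A. if P b then c else 0) = c * card {b\<in>A. P b}"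
proof -
  have "(\<Sum>b\<in>A. if P b then c else 0) = (\<Sum>b\<in>{b\<in>A. P b}. c)"
    using sum.inter_filter[OF assms, of "\<lambda>_. c" P] by simp
  then show ?thesis by simp
qed

lemma count_bound:
  fixes x :: "'d::finite \<Rightarrow> int" and c :: real
  assumes fin: "finite \<Lambda>" and x: "x \<in> \<Lambda>" and c: "0 \<le> c"
  shows "(\<Sum>a\<in>\<Lambda>. \<Sum>b\<in>\<Lambda>. if adj_n n a b then c * ((if a = x then 1 else 0) + (if b = x then 1 else 0)) else 0)
     \<le> c * (4 * CARD('d))"
proof -
  have cardb: "real (card {b\<in>\<Lambda>. adj_n n x b}) \<le> 2 * CARD('d)"
  proof -
    have "card {b\<in>\<Lambda>. adj_n n x b} \<le> card {b. adj_n n x b}"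
      using nbr_card[of n x] by (intro card_mono) auto
    then show ?thesis using nbr_card[of n x] by linarith
  qed
  have e: "(if adj_n n a b then c * ((if a = x then 1 else 0) + (if b = x then 1 else 0)) else 0)
     = (if adj_n n a b \<and> a = x then c else 0) + (if adj_n n a b \<and> b = x then c else 0)" for a b
    using adj_neq[of n a b] by auto
  have "(\<Sum>a\<in>\<Lambda>. \<Sum>b\<in>\<Lambda>. if adj_n n a b then c * ((if a = x then 1 else 0) + (if b = x then 1 else 0)) else 0)
     = (\<Sum>a\<in>\<Lambda>. \<Sum>b\<in>\<Lambda>. if adj_n n a b \<and> a = x then c else 0) + (\<Sum>a\<in>\<Lambda>. \<Sum>b\<in>\<Lambda>. if adj_n n a b \<and> b = x then c else 0)"
    unfolding e by (simp add: sum.distrib)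
  also have "(\<Sum>a\<in>\<Lambda>. \<Sum>b\<in>\<Lambda>. if adj_n n a b \<and> a = x then c else 0) = (\<Sum>b\<in>\<Lambda>. if adj_n n x b then c else 0)"
  proof -
    have "(\<Sum>a\<in>\<Lambda>. \<Sum>b\<in>\<Lambda>. if adj_n n a b \<and> a = x then c else 0) = (\<Sum>a\<in>\<Lambda>. if a = x then (\<Sum>b\<in>\<Lambda>. if adj_n n x b then c else 0) else 0)"
      by (intro sum.cong refl) auto
    also have "\<dots> = (\<Sum>b\<in>\<Lambda>. if adj_n n x b then c else 0)" using fin x by simp
    finally show ?thesis .
  qed
  also have "(\<Sum>a\<in>\<Lambda>. \<Sum>b\<in>\<Lambda>. if adj_n n a b \<and> b = x then c else 0) = (\<Sum>a\<in>\<Lambda>. if adj_n n x a then c else 0)"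
  proof (intro sum.cong refl)
    fix a assume "a \<in> \<Lambda>"
    have "(\<Sum>b\<in>\<Lambda>. if adj_n n a b \<and> b = x then c else 0) = (\<Sum>b\<in>\<Lambda>. if b = x then (if adj_n n a x then c else 0) else 0)"
      by (intro sum.cong refl) auto
    also have "\<dots> = (if adj_n n a x then c else 0)" using fin x by simp
    finally show "(\<Sum>b\<in>\<Lambda>. if adj_n n a b \<and> b = x then c else 0) = (if adj_n n x a then c else 0)"
      using adj_sym[of n a x] by simp
  qed
  also have "(\<Sum>b\<in>\<Lambda>. if adj_n n x b then c else 0) + (\<Sum>a\<in>\<Lambda>. if adj_n n x a then c else 0)
      = c * card {b\<in>\<Lambda>. adj_n n x b} + c * card {b\<in>\<Lambda>. adj_n n x b}"
    using sum_if_c[OF fin] by simp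
  also have "\<dots> \<le> c * (2 * CARD('d)) + c * (2 * CARD('d))"
    using cardb c by (intro add_mono mult_left_mono) auto
  finally show ?thesis by (simp add: algebra_simps)
qed

definition Zr where "Zr n \<Lambda> \<beta>1 \<beta>2 r = (\<integral>\<theta>. exp (- hamiltonian n \<Lambda> \<beta>1 \<beta>2 r \<theta>) \<partial>angle_measure \<Lambda>)"
definition Nr where "Nr n \<Lambda> \<beta>1 \<beta>2 m r = (\<integral>\<theta>. cos (mdot \<Lambda> m \<theta>) * exp (- hamiltonian n \<Lambda> \<beta>1 \<beta>2 r \<theta>) \<partial>angle_measure \<Lambda>)"

lemma am: "angle_measure \<Lambda> = TI \<Lambda>"
  unfolding angle_measure_def U_def ..

lemma mdot_lin: "mdot \<Lambda> m = lin \<Lambda> m"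
  unfolding mdot_def[abs_def] lin_def[abs_def] ..

lemma kap_nonneg:
  assumes "0 < \<beta>1" "0 < \<beta>2" "0 \<le> r a" "0 \<le> r b"
  shows "0 \<le> kap n \<beta>1 \<beta>2 r a b"
  unfolding kap_def using assms by auto

lemma exp_pos_int:
  assumes "P \<in> cospoly I"
  shows "0 < (\<integral>\<theta>. exp (P \<theta>) \<partial>TI I)"
proof -
  obtain B where B: "\<And>\<theta>. \<bar>P \<theta>\<bar> \<le> B" using cospoly_bdd[OF assms] by blast
  interpret prob_space "TI I" by (rule T_prob)
  note [measurable] = cospoly_meas[OF assms]
  have "(\<integral>\<theta>. exp (- B) \<partial>TI I) \<le> (\<integral>\<theta>. exp (P \<theta>) \<partial>TI I)"
  proof (rule integral_mono)
    show "integrable (TI I) (\<lambda>\<theta>. exp (- B))" by simp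
    show "integrable (TI I) (\<lambda>\<theta>. exp (P \<theta>))"
    proof (rule integrable_const_bound[where B="exp B"])
      show "AE x in TI I. norm (exp (P x)) \<le> exp B"
        using B by (intro AE_I2) (simp add: abs_le_iff)
    qed simp
    show "exp (- B) \<le> exp (P \<theta>)" for \<theta> using B[of \<theta>] by simp
  qed
  moreover have "(\<integral>\<theta>. exp (- B) \<partial>TI I) = exp (- B)" by (simp add: prob_space)
  ultimately show ?thesis by (smt (verit) exp_gt_zero)
qed

lemma Zr_pos:
  assumes "finite \<Lambda>" "0 < \<beta>1" "0 < \<beta>2" "\<forall>a\<in>\<Lambda>. 0 \<le> r a"
  shows "0 < Zr n \<Lambda> \<beta>1 \<beta>2 r"
proof -
  have "Pk n \<Lambda> (kap n \<beta>1 \<beta>2 r) \<in> cospoly \<Lambda>"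
    using assms by (intro Pk_cospoly kap_nonneg) auto
  then show ?thesis unfolding Zr_def negH am by (rule exp_pos_int)
qed

lemma mono_c:
  assumes fin: "finite \<Lambda>" and b: "0 < \<beta>1" "0 < \<beta>2"
    and r: "\<forall>a\<in>\<Lambda>. 0 \<le> r a \<and> r a \<le> r' a"
  shows "Nr n \<Lambda> \<beta>1 \<beta>2 m r / Zr n \<Lambda> \<beta>1 \<beta>2 r \<le> Nr n \<Lambda> \<beta>1 \<beta>2 m r' / Zr n \<Lambda> \<beta>1 \<beta>2 r'"
proof -
  define P where "P = Pk n \<Lambda> (kap n \<beta>1 \<beta>2 r)"
  define Q where "Q = Pk n \<Lambda> (\<lambda>x y. kap n \<beta>1 \<beta>2 r' x y - kap n \<beta>1 \<beta>2 r x y)"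
  have P: "P \<in> cospoly \<Lambda>" unfolding P_def using r b by (intro Pk_cospoly fin kap_nonneg) auto
  have Q: "Q \<in> cospoly \<Lambda>" unfolding Q_def
  proof (intro Pk_cospoly fin)
    fix x y assume "x \<in> \<Lambda>" "y \<in> \<Lambda>"
    then have "r x * r y \<le> r' x * r' y" using r by (intro mult_mono) force+
    moreover have "0 \<le> (1/2) * (if x \<in> Zd_vert n \<or> y \<in> Zd_vert n then \<beta>1 else \<beta>2)" using b by auto
    ultimately have "(1/2) * (if x \<in> Zd_vert n \<or> y \<in> Zd_vert n then \<beta>1 else \<beta>2) * (r x * r y)
       \<le> (1/2) * (if x \<in> Zd_vert n \<or> y \<in> Zd_vert n then \<beta>1 else \<beta>2) * (r' x * r' y)"
      by (rule mult_left_mono)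
    then show "0 \<le> kap n \<beta>1 \<beta>2 r' x y - kap n \<beta>1 \<beta>2 r x y" unfolding kap_def by (simp add: mult.assoc)
  qed
  have r': "\<forall>a\<in>\<Lambda>. 0 \<le> r' a" using r by force
  have e1: "- hamiltonian n \<Lambda> \<beta>1 \<beta>2 r \<theta> = P \<theta>" for \<theta> unfolding P_def negH ..
  have e2: "exp (- hamiltonian n \<Lambda> \<beta>1 \<beta>2 r' \<theta>) = exp (P \<theta>) * exp (Q \<theta>)" for \<theta>
  proof -
    have "(\<lambda>x y. kap n \<beta>1 \<beta>2 r x y + (kap n \<beta>1 \<beta>2 r' x y - kap n \<beta>1 \<beta>2 r x y)) = kap n \<beta>1 \<beta>2 r'" by auto
    then have "P \<theta> + Q \<theta> = - hamiltonian n \<Lambda> \<beta>1 \<beta>2 r' \<theta>" unfolding P_def Q_def Pk_add negH by simp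
    then show ?thesis by (simp add: exp_add[symmetric])
  qed
  have G: "(\<integral>\<theta>. cos (lin \<Lambda> m \<theta>) * exp (P \<theta>) \<partial>TI \<Lambda>) * (\<integral>\<theta>. exp (P \<theta>) * exp (Q \<theta>) \<partial>TI \<Lambda>)
      \<le> (\<integral>\<theta>. cos (lin \<Lambda> m \<theta>) * exp (P \<theta>) * exp (Q \<theta>) \<partial>TI \<Lambda>) * (\<integral>\<theta>. exp (P \<theta>) \<partial>TI \<Lambda>)"
    by (rule ginibre[OF fin P Q])
  have "Nr n \<Lambda> \<beta>1 \<beta>2 m r * Zr n \<Lambda> \<beta>1 \<beta>2 r' \<le> Nr n \<Lambda> \<beta>1 \<beta>2 m r' * Zr n \<Lambda> \<beta>1 \<beta>2 r"
    using G unfolding Nr_def Zr_def am mdot_lin e1 e2 by (simp add: mult.assoc)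
  moreover have "0 < Zr n \<Lambda> \<beta>1 \<beta>2 r" "0 < Zr n \<Lambda> \<beta>1 \<beta>2 r'"
    using Zr_pos[OF fin b] r r' by auto
  ultimately show ?thesis by (simp add: divide_simps)
qed



lemma ratio:
  fixes r :: "('d::finite \<Rightarrow> int) \<Rightarrow> real"
  assumes fin: "finite \<Lambda>" and b: "0 < \<beta>1" "0 < \<beta>2"
    and r01: "\<forall>a\<in>\<Lambda>. r a = 0 \<or> r a = 1"
    and x: "x \<in> \<Lambda>" "x \<in> Zd_vert n" "r x = 0"
  shows "Zr n \<Lambda> \<beta>1 \<beta>2 (r(x:=1)) \<le> exp (2 * real CARD('d) * \<beta>1) * Zr n \<Lambda> \<beta>1 \<beta>2 r"
proof -
  let ?r' = "r(x:=1)"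
  define \<delta> where "\<delta> a b = kap n \<beta>1 \<beta>2 ?r' a b - kap n \<beta>1 \<beta>2 r a b" for a b
  define P where "P = Pk n \<Lambda> (kap n \<beta>1 \<beta>2 r)"
  define Q where "Q = Pk n \<Lambda> \<delta>"
  have dprop: "0 \<le> \<delta> a b \<and> \<delta> a b \<le> (1/2) * \<beta>1 * ((if a = x then 1 else 0) + (if b = x then 1 else 0))"
    if ab: "a \<in> \<Lambda>" "b \<in> \<Lambda>" "adj_n n a b" for a b
  proof -
    have neq: "a \<noteq> b" using adj_neq[OF ab(3)] .
    consider "a = x" | "b = x" | "a \<noteq> x" "b \<noteq> x" by blast
    then show ?thesis
    proof cases
      case 1
      then have "\<delta> a b = (1/2) * \<beta>1 * r b" using neq x unfolding \<delta>_def kap_def by auto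
      moreover have "r b = 0 \<or> r b = 1" using r01 ab by auto
      ultimately show ?thesis using 1 neq b by auto
    next
      case 2
      then have "\<delta> a b = (1/2) * \<beta>1 * r a" using neq x unfolding \<delta>_def kap_def by auto
      moreover have "r a = 0 \<or> r a = 1" using r01 ab by auto
      ultimately show ?thesis using 2 neq b by auto
    qed (auto simp: \<delta>_def kap_def b)
  qed
  have P: "P \<in> cospoly \<Lambda>" unfolding P_def
    using r01 b by (intro Pk_cospoly fin kap_nonneg) force+
  have Q: "Q \<in> cospoly \<Lambda>" unfolding Q_def using dprop by (intro Pk_cospoly fin) auto
  note [measurable] = cospoly_meas[OF P] cospoly_meas[OF Q]
  obtain BP where BP: "\<And>\<theta>. \<bar>P \<theta>\<bar> \<le> BP" using cospoly_bdd[OF P] by blast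
  obtain BQ where BQ: "\<And>\<theta>. \<bar>Q \<theta>\<bar> \<le> BQ" using cospoly_bdd[OF Q] by blast
  have e: "- hamiltonian n \<Lambda> \<beta>1 \<beta>2 ?r' \<theta> = P \<theta> + Q \<theta>" for \<theta>
  proof -
    have "(\<lambda>a b. kap n \<beta>1 \<beta>2 r a b + \<delta> a b) = kap n \<beta>1 \<beta>2 ?r'" by (auto simp: \<delta>_def fun_eq_iff)
    then show ?thesis unfolding P_def Q_def Pk_add negH by simp
  qed
  have Qb: "Q \<theta> \<le> 2 * real CARD('d) * \<beta>1" for \<theta>
  proof -
    have "Q \<theta> \<le> (\<Sum>a\<in>\<Lambda>. \<Sum>b\<in>\<Lambda>. if adj_n n a b then ((1/2) * \<beta>1) * ((if a = x then 1 else 0) + (if b = x then 1 else 0)) else 0)"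
      unfolding Q_def Pk_def
    proof (intro sum_mono)
      fix a b assume ab: "a \<in> \<Lambda>" "b \<in> \<Lambda>"
      show "(if adj_n n a b then \<delta> a b * cos (\<theta> a - \<theta> b) else 0)
         \<le> (if adj_n n a b then ((1/2) * \<beta>1) * ((if a = x then 1 else 0) + (if b = x then 1 else 0)) else 0)"
      proof (cases "adj_n n a b")
        case True
        have d: "0 \<le> \<delta> a b" "\<delta> a b \<le> (1/2) * \<beta>1 * ((if a = x then 1 else 0) + (if b = x then 1 else 0))"
          using dprop[OF ab True] by auto
        have "\<delta> a b * cos (\<theta> a - \<theta> b) \<le> \<delta> a b * 1" using d(1) by (intro mult_left_mono) auto
        then show ?thesis using True d(2) by simp
      qed simp
    qed
    also have "\<dots> \<le> ((1/2) * \<beta>1) * (4 * CARD('d))"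
      by (rule count_bound[OF fin x(1)]) (use b in auto)
    finally show ?thesis by (simp add: mult_ac)
  qed
  interpret prob_space "TI \<Lambda>" by (rule T_prob)
  have "Zr n \<Lambda> \<beta>1 \<beta>2 ?r' = (\<integral>\<theta>. exp (P \<theta>) * exp (Q \<theta>) \<partial>TI \<Lambda>)"
    unfolding Zr_def am e by (simp add: exp_add)
  also have "\<dots> \<le> (\<integral>\<theta>. exp (P \<theta>) * exp (2 * real CARD('d) * \<beta>1) \<partial>TI \<Lambda>)"
  proof (rule integral_mono)
    have eP: "\<bar>exp (P \<theta>)\<bar> \<le> exp BP" for \<theta> using BP[of \<theta>] by (simp add: abs_le_iff)
    have eQ: "\<bar>exp (Q \<theta>)\<bar> \<le> exp BQ" for \<theta> using BQ[of \<theta>] by (simp add: abs_le_iff)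
    show "integrable (TI \<Lambda>) (\<lambda>\<theta>. exp (P \<theta>) * exp (Q \<theta>))"
    proof (rule bdd_int[OF T_prob, where B="exp BP * exp BQ"])
      show "(\<lambda>\<theta>. exp (P \<theta>) * exp (Q \<theta>)) \<in> borel_measurable (TI \<Lambda>)" by measurable
      show "\<bar>exp (P \<theta>) * exp (Q \<theta>)\<bar> \<le> exp BP * exp BQ" for \<theta> by (rule abs_mult_le[OF eP eQ])
    qed
    show "integrable (TI \<Lambda>) (\<lambda>\<theta>. exp (P \<theta>) * exp (2 * real CARD('d) * \<beta>1))"
    proof (rule bdd_int[OF T_prob, where B="exp BP * exp (2 * real CARD('d) * \<beta>1)"])
      show "(\<lambda>\<theta>. exp (P \<theta>) * exp (2 * real CARD('d) * \<beta>1)) \<in> borel_measurable (TI \<Lambda>)" by measurable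
      show "\<bar>exp (P \<theta>) * exp (2 * real CARD('d) * \<beta>1)\<bar> \<le> exp BP * exp (2 * real CARD('d) * \<beta>1)" for \<theta>
        using eP[of \<theta>] by (simp add: abs_mult)
    qed
    show "exp (P \<theta>) * exp (Q \<theta>) \<le> exp (P \<theta>) * exp (2 * real CARD('d) * \<beta>1)" for \<theta>
      using Qb[of \<theta>] by simp
  qed
  also have "\<dots> = (\<integral>\<theta>. exp (P \<theta>) \<partial>TI \<Lambda>) * exp (2 * real CARD('d) * \<beta>1)"
    by (rule integral_mult_left_zero)
  also have "(\<integral>\<theta>. exp (P \<theta>) \<partial>TI \<Lambda>) = Zr n \<Lambda> \<beta>1 \<beta>2 r"
    unfolding Zr_def am negH P_def ..
  finally show ?thesis by (simp only: mult.commute)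
qed



lemma p0_ident:
  fixes pbar c :: real
  assumes "0 < pbar" "pbar < 1"
  defines "p0 \<equiv> pbar / (pbar + (1 - pbar) * exp (- c))"
  shows "(1 - p0) * pbar * exp c = p0 * (1 - pbar)" and "0 \<le> p0" and "p0 \<le> 1"
proof -
  define e where "e = exp (- c)"
  have e: "0 < e" "exp c = 1 / e" unfolding e_def by (simp_all add: exp_minus field_simps)
  define D where "D = pbar + (1 - pbar) * e"
  have D: "0 < D" unfolding D_def using assms(1,2) e by (smt (verit) mult_pos_pos)
  have p0: "p0 = pbar / D" unfolding p0_def D_def e_def ..
  have h: "1 - p0 = (1 - pbar) * e / D" unfolding p0 using D by (simp add: field_simps D_def)
  show "(1 - p0) * pbar * exp c = p0 * (1 - pbar)" unfolding h unfolding p0 e(2) using e(1) D by (simp add: field_simps)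
  show "0 \<le> p0" unfolding p0 using D assms by simp
  have "pbar \<le> D" unfolding D_def using assms e by simp
  then show "p0 \<le> 1" unfolding p0 using D by simp
qed

theorem proposition5p1:
  fixes n :: nat and \<beta>1 \<beta>2 pbar :: real
    and \<Lambda> :: "('d::finite \<Rightarrow> int) set" and m :: "('d \<Rightarrow> int) \<Rightarrow> int"
  assumes "\<beta>1 > 0" and "\<beta>2 > 0" and "0 < pbar" and "pbar < 1"
    and "finite \<Lambda>" and "\<Lambda> \<subseteq> Zdn_vert n"
  shows "let p0 = pbar / (pbar + (1 - pbar) * exp (- 2 * real CARD('d) * \<beta>1)) in
    annealed_avg n \<Lambda> \<beta>1 \<beta>2 pbar (\<lambda>\<theta>. cos (mdot \<Lambda> m \<theta>))
      \<le> dil_expect n \<Lambda> p0 (\<lambda>r. quenched_avg n \<Lambda> \<beta>1 \<beta>2 r (\<lambda>\<theta>. cos (mdot \<Lambda> m \<theta>)))"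
proof -
  note b = assms(1,2) and pb = assms(3,4) and fin = assms(5)
  define c where "c = 2 * real CARD('d) * \<beta>1"
  define p0 where "p0 = pbar / (pbar + (1 - pbar) * exp (- c))"
  have p0e: "pbar / (pbar + (1 - pbar) * exp (- 2 * real CARD('d) * \<beta>1)) = p0"
    unfolding p0_def c_def by simp
  have pid: "(1 - p0) * pbar * exp c = p0 * (1 - pbar)" "0 \<le> p0" "p0 \<le> 1"
    using p0_ident[OF pb, of c] unfolding p0_def by auto
  define W where "W = \<Lambda> \<inter> Zd_vert n"
  have finW: "finite W" "W \<subseteq> \<Lambda>" using fin unfolding W_def by auto
  have conf: "configs n \<Lambda> = CC \<Lambda> W"
    unfolding configs_def CC_def W_def by (rule PiE_cong) auto
  have bw: "bern_weight n \<Lambda> p r = wt W p r" for p r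
    unfolding bern_weight_def wt_def W_def ..
  have vals: "\<forall>a\<in>\<Lambda>. r a = 0 \<or> r a = 1" if "r \<in> CC \<Lambda> W" for r
    using that unfolding CC_def by (auto simp: PiE_iff split: if_split_asm)
  have vals2: "\<forall>a\<in>\<Lambda>. 0 \<le> r a" if "r \<in> CC \<Lambda> W" for r
    using vals[OF that] by force
  let ?Z = "Zr n \<Lambda> \<beta>1 \<beta>2" and ?N = "Nr n \<Lambda> \<beta>1 \<beta>2 m"
  define \<nu> where "\<nu> r = wt W pbar r * ?Z r" for r
  define cf where "cf r = ?N r / ?Z r" for r
  have Zp: "0 < ?Z r" if "r \<in> CC \<Lambda> W" for r using Zr_pos[OF fin b vals2[OF that]] .
  have wt_nn: "0 \<le> wt W p r" if "0 \<le> p" "p \<le> 1" for p r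
    unfolding wt_def using that by (intro prod_nonneg) auto
  have wt_pos: "0 < wt W pbar r" for r
    unfolding wt_def using pb by (intro prod_pos) auto
  have nu_nn: "\<forall>r\<in>CC \<Lambda> W. 0 \<le> \<nu> r"
    unfolding \<nu>_def using Zp wt_pos by (auto intro!: mult_nonneg_nonneg less_imp_le)
  have wt_split: "wt W p r = (if r x = 1 then p else 1 - p) * wt (W - {x}) p r" if "x \<in> W" for p r x
    unfolding wt_def using prod.remove[OF finW(1) that, of "\<lambda>x. if r x = 1 then p else 1 - p"] .
  have wt_upd: "wt (W - {x}) p (r(x:=0)) = wt (W - {x}) p r" for p r x
    unfolding wt_def by (intro prod.cong) auto
  have rat: "\<forall>r\<in>CC \<Lambda> W. \<forall>x\<in>W. r x = 1 \<longrightarrow> (1 - p0) * \<nu> r \<le> p0 * \<nu> (r(x:=0))"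
  proof (intro ballI impI)
    fix r x assume r: "r \<in> CC \<Lambda> W" and x: "x \<in> W" and rx: "r x = 1"
    let ?r0 = "r(x:=0)"
    have r0: "?r0 \<in> CC \<Lambda> W" by (rule CC_upd0[OF r x finW(2)])
    have r0r: "?r0(x:=1) = r" using rx by auto
    have xs: "x \<in> \<Lambda>" "x \<in> Zd_vert n" using x unfolding W_def by auto
    have "?Z (?r0(x:=1)) \<le> exp c * ?Z ?r0"
      unfolding c_def by (rule ratio[OF fin b vals[OF r0] xs]) simp
    then have Zr: "?Z r \<le> exp c * ?Z ?r0" unfolding r0r .
    define B where "B = wt (W - {x}) pbar r"
    have B: "0 \<le> B" unfolding B_def wt_def using pb by (intro prod_nonneg) auto
    have w1: "wt W pbar r = pbar * B" unfolding B_def using wt_split[OF x, of pbar r] rx by simp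
    have w0: "wt W pbar ?r0 = (1 - pbar) * B" unfolding B_def using wt_split[OF x, of pbar ?r0] wt_upd by simp
    have "(1 - p0) * \<nu> r = ((1 - p0) * pbar * B) * ?Z r" unfolding \<nu>_def w1 by (simp add: mult_ac)
    also have "\<dots> \<le> ((1 - p0) * pbar * B) * (exp c * ?Z ?r0)"
      using Zr pid pb B by (intro mult_left_mono) auto
    also have "\<dots> = ((1 - p0) * pbar * exp c) * B * ?Z ?r0" by (simp add: mult_ac)
    also have "\<dots> = p0 * \<nu> ?r0" unfolding pid(1) \<nu>_def w0 by (simp add: mult_ac)
    finally show "(1 - p0) * \<nu> r \<le> p0 * \<nu> ?r0" .
  qed
  have mon: "\<forall>r\<in>CC \<Lambda> W. \<forall>x\<in>W. r x = 1 \<longrightarrow> cf (r(x:=0)) \<le> cf r"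
  proof (intro ballI impI)
    fix r x assume r: "r \<in> CC \<Lambda> W" and x: "x \<in> W" and rx: "r x = 1"
    have "\<forall>a\<in>\<Lambda>. 0 \<le> (r(x:=0)) a \<and> (r(x:=0)) a \<le> r a"
      using vals[OF r] rx by auto
    then show "cf (r(x:=0)) \<le> cf r" unfolding cf_def by (rule mono_c[OF fin b])
  qed
  have D: "(\<Sum>r\<in>CC \<Lambda> W. \<nu> r * cf r) \<le> (\<Sum>r\<in>CC \<Lambda> W. \<nu> r) * (\<Sum>r\<in>CC \<Lambda> W. wt W p0 r * cf r)"
    by (rule dom[OF finW fin pid(2,3) nu_nn rat mon])
  have one: "(\<lambda>x\<in>\<Lambda>. (1::real)) \<in> CC \<Lambda> W" unfolding CC_def by auto
  have Spos: "0 < (\<Sum>r\<in>CC \<Lambda> W. \<nu> r)"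
    by (rule sum_pos2[OF CC_finite[OF fin] one]) (use nu_nn Zp[OF one] wt_pos in \<open>auto simp: \<nu>_def\<close>)
  have num: "(\<Sum>r\<in>CC \<Lambda> W. wt W pbar r * ?N r) = (\<Sum>r\<in>CC \<Lambda> W. \<nu> r * cf r)"
    unfolding \<nu>_def cf_def using Zp by (intro sum.cong refl) (simp add: field_simps less_imp_neq[symmetric])
  have "annealed_avg n \<Lambda> \<beta>1 \<beta>2 pbar (\<lambda>\<theta>. cos (mdot \<Lambda> m \<theta>))
      = (\<Sum>r\<in>CC \<Lambda> W. \<nu> r * cf r) / (\<Sum>r\<in>CC \<Lambda> W. \<nu> r)"
  proof -
    have "annealed_avg n \<Lambda> \<beta>1 \<beta>2 pbar (\<lambda>\<theta>. cos (mdot \<Lambda> m \<theta>))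
      = (\<Sum>r\<in>CC \<Lambda> W. wt W pbar r * ?N r) / (\<Sum>r\<in>CC \<Lambda> W. \<nu> r)"
      unfolding annealed_avg_def conf bw Nr_def Zr_def \<nu>_def ..
    then show ?thesis unfolding num .
  qed
  also have "\<dots> \<le> (\<Sum>r\<in>CC \<Lambda> W. wt W p0 r * cf r)"
    using D Spos by (simp add: divide_le_eq mult.commute)
  also have "\<dots> = dil_expect n \<Lambda> p0 (\<lambda>r. quenched_avg n \<Lambda> \<beta>1 \<beta>2 r (\<lambda>\<theta>. cos (mdot \<Lambda> m \<theta>)))"
    unfolding dil_expect_def conf bw quenched_avg_def cf_def Nr_def Zr_def ..
  finally show ?thesis unfolding p0e Let_def .
qed


end
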